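(* Let $(\Omega,\mu)$ be a probability space and $T:\Omega\to\Omega$ an ergodic measure-preserving map. Let $a:\mathbb{N}\times\Omega\to\mathbb{R}$ be a measurable function with $a(0,\omega)\equiv 0$ such that $a(n+m,\omega)\leq a(n,\omega)+a(m,T^n\omega)$ for all integers $n,m>0$ and a.e. $\omega$, and such that $\omega\mapsto a(1,\omega)$ is integrable. Let $A=\inf_n \frac{1}{n}\int_\Omega a(n,\omega)\,d\mu$ and assume $A$ is finite. Fix $\rho>0$. Then there exist a sequence of positive reals $\delta_\ell\to 0$ (independent of $\omega$) and a measurable set $O\subset\Omega$ with $\mu(O)\geq 1-\rho$ such that for every $\omega\in O$ the set $$A(\omega)=\{n\in\mathbb{N}:\ \left|a(n,\omega)-a(n-\ell,T^\ell\omega)-A\ell\right|\leq \ell\,\delta_\ell \text{ for all } 1\le \ell\leq n\}$$ has upper asymptotic density at least $1-\rho$.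
   Context: The upper asymptotic density of $U\subset\mathbb{N}$ is $\limsup_{N\to\infty}\#(U\cap[0,N-1])/N$. *)

theory Defs
  imports "HOL-Probability.Probability"
begin

definition measure_preserving_map :: "'a measure \<Rightarrow> ('a \<Rightarrow> 'a) \<Rightarrow> bool" where
  "measure_preserving_map M T \<longleftrightarrow> T \<in> measurable M M \<and> distr M M T = M"

definition ergodic_map :: "'a measure \<Rightarrow> ('a \<Rightarrow> 'a) \<Rightarrow> bool" where
  "ergodic_map M T \<longleftrightarrow> measure_preserving_map M T \<and>
     (\<forall>B \<in> sets M. T -` B \<inter> space M = B \<longrightarrow> measure M B = 0 \<or> measure M B = 1)"

text \<open>Extended-real valued integral: integral of positive part minus integral of
  negative part (well defined whenever the positive part is integrable).\<close>
definition ext_integral :: "'a measure \<Rightarrow> ('a \<Rightarrow> real) \<Rightarrow> ereal" where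
  "ext_integral M f = enn2ereal (\<integral>\<^sup>+ x. ennreal (f x) \<partial>M) - enn2ereal (\<integral>\<^sup>+ x. ennreal (- f x) \<partial>M)"

definition upper_density :: "nat set \<Rightarrow> ereal" where
  "upper_density U = limsup (\<lambda>N. ereal (real (card (U \<inter> {0..<N})) / real N))"

end

theory Submission
  imports Defs
begin


locale mpt = prob_space M for M :: "'a measure" +
  fixes T :: "'a \<Rightarrow> 'a"
  assumes Tm: "T \<in> measurable M M" and Tp: "distr M M T = M"
begin

lemma Tn_meas[measurable]: "(T ^^ n) \<in> measurable M M"
proof (induction n)
  case (Suc n) show ?case unfolding funpow.simps(2) by (rule measurable_comp[OF Suc Tm])
qed simp

lemma Tn_space: "x \<in> space M \<Longrightarrow> (T ^^ n) x \<in> space M"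
  by (rule measurable_space[OF Tn_meas])

lemma Tn_distr: "distr M M (T ^^ n) = M"
proof (induction n)
  case 0 then show ?case by (simp add: id_def distr_id2)
next
  case (Suc n)
  have "distr M M (T ^^ Suc n) = distr M M (T \<circ> (T ^^ n))" by simp
  also have "\<dots> = distr (distr M M (T ^^ n)) M T"
    using distr_distr[OF Tm Tn_meas] by simp
  also have "\<dots> = M" using Suc Tp by simp
  finally show ?case .
qed

lemma Tn_add: "(T ^^ (m + n)) x = (T ^^ m) ((T ^^ n) x)"
  by (simp add: funpow_add)

lemma Tn_add2: "(T ^^ (m + n)) x = (T ^^ n) ((T ^^ m) x)"
  by (metis add.commute comp_apply funpow_add)

lemma integral_Tn:
  fixes f :: "'a \<Rightarrow> real"
  assumes "f \<in> borel_measurable M"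
  shows "integral\<^sup>L M (\<lambda>x. f ((T ^^ n) x)) = integral\<^sup>L M f"
  using integral_distr[OF Tn_meas assms, of n] Tn_distr[of n] by simp

lemma integrable_Tn:
  fixes f :: "'a \<Rightarrow> real"
  assumes "integrable M f"
  shows "integrable M (\<lambda>x. f ((T ^^ n) x))"
proof -
  have "integrable (distr M M (T ^^ n)) f" using assms Tn_distr[of n] by simp
  then show ?thesis using integrable_distr[OF Tn_meas] by blast
qed

lemma emeasure_Tn:
  assumes "B \<in> sets M"
  shows "emeasure M ((T ^^ n) -` B \<inter> space M) = emeasure M B"
  using emeasure_distr[OF Tn_meas assms, of n] Tn_distr[of n] by simp

lemma measure_Tn:
  assumes "B \<in> sets M"
  shows "measure M ((T ^^ n) -` B \<inter> space M) = measure M B"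
  using emeasure_Tn[OF assms] by (simp add: measure_def)

lemma AE_Tn:
  assumes "AE x in M. P x"
  shows "AE x in M. P ((T ^^ n) x)"
proof -
  have "AE x in distr M M (T ^^ n). P x" by (subst Tn_distr) (rule assms)
  then show ?thesis by (rule AE_distrD[OF Tn_meas])
qed

definition birk :: "('a \<Rightarrow> real) \<Rightarrow> nat \<Rightarrow> 'a \<Rightarrow> real" where
  "birk f n x = (\<Sum>i<n. f ((T ^^ i) x))"

lemma birk_meas[measurable]:
  assumes [measurable]: "f \<in> borel_measurable M"
  shows "birk f n \<in> borel_measurable M"
  unfolding birk_def by measurable

lemma birk_integrable:
  assumes "integrable M f"
  shows "integrable M (birk f n)"
  unfolding birk_def using integrable_Tn[OF assms] by auto

lemma birk_integral:
  assumes "integrable M f"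
  shows "integral\<^sup>L M (birk f n) = n * integral\<^sup>L M f"
proof -
  have "integral\<^sup>L M (birk f n) = (\<Sum>i<n. integral\<^sup>L M (\<lambda>x. f ((T ^^ i) x)))"
    unfolding birk_def using integrable_Tn[OF assms] by (simp add: integral_sum)
  also have "\<dots> = (\<Sum>i<n. integral\<^sup>L M f)"
    using integral_Tn[OF borel_measurable_integrable[OF assms]] by simp
  finally show ?thesis by simp
qed

lemma birk_0[simp]: "birk f 0 x = 0" by (simp add: birk_def)

lemma birk_Suc: "birk f (Suc n) x = f x + birk f n (T x)"
proof -
  have "birk f (Suc n) x = f ((T^^0) x) + (\<Sum>i<n. f ((T ^^ Suc i) x))"
    unfolding birk_def by (rule sum.lessThan_Suc_shift)
  also have "(\<Sum>i<n. f ((T ^^ Suc i) x)) = birk f n (T x)"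
    unfolding birk_def by (simp add: funpow_swap1)
  finally show ?thesis by simp
qed

lemma birk_Suc_right: "birk f (Suc n) x = birk f n x + f ((T^^n) x)"
  by (simp add: birk_def)

lemma birk_add: "birk f (m + n) x = birk f m x + birk f n ((T^^m) x)"
proof (induction n)
  case (Suc n)
  have "birk f (m + Suc n) x = birk f (m + n) x + f ((T^^(m+n)) x)"
    using birk_Suc_right[of f "m+n" x] by simp
  also have "\<dots> = birk f m x + birk f (Suc n) ((T^^m) x)"
    using Suc birk_Suc_right[of f n "(T^^m) x"] by (simp add: Tn_add2)
  finally show ?case .
qed simp

lemma birk_diff: "birk (\<lambda>x. f x - c) n x = birk f n x - c * n"
  by (simp add: birk_def sum_subtractf)

lemma birk_minus: "birk (\<lambda>x. - f x) n x = - birk f n x"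
  by (simp add: birk_def sum_negf)

lemma birk_mono: "(\<And>y. f y \<le> g y) \<Longrightarrow> birk f n x \<le> birk g n x"
  unfolding birk_def by (rule sum_mono) auto

definition mx :: "('a \<Rightarrow> real) \<Rightarrow> nat \<Rightarrow> 'a \<Rightarrow> real" where
  "mx g N x = Max ((\<lambda>n. birk g n x) ` {..N})"

lemma mx_ge: "n \<le> N \<Longrightarrow> birk g n x \<le> mx g N x"
  unfolding mx_def by (rule Max_ge) auto

lemma mx_nonneg: "0 \<le> mx g N x"
  using mx_ge[of 0 N g x] by simp

lemma mx_attained: "\<exists>n\<le>N. mx g N x = birk g n x"
proof -
  have "mx g N x \<in> (\<lambda>n. birk g n x) ` {..N}"
    unfolding mx_def by (rule Max_in) auto
  then show ?thesis by auto
qed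

lemma mx_mono: "N \<le> N' \<Longrightarrow> mx g N x \<le> mx g N' x"
  using mx_attained[of N g x] mx_ge[of _ N' g x] by force

lemma mx_meas[measurable]:
  assumes [measurable]: "g \<in> borel_measurable M"
  shows "mx g N \<in> borel_measurable M"
  unfolding mx_def by measurable

lemma mx_integrable:
  assumes "integrable M g"
  shows "integrable M (mx g N)"
proof (rule Bochner_Integration.integrable_bound[where f = "\<lambda>x. \<Sum>n\<le>N. \<bar>birk g n x\<bar>"])
  show "integrable M (\<lambda>x. \<Sum>n\<le>N. \<bar>birk g n x\<bar>)"
    using birk_integrable[OF assms] by auto
  show "mx g N \<in> borel_measurable M" using assms by measurable
  show "AE x in M. norm (mx g N x) \<le> norm (\<Sum>n\<le>N. \<bar>birk g n x\<bar>)"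
  proof (rule AE_I2)
    fix x
    obtain n where n: "n \<le> N" "mx g N x = birk g n x" using mx_attained by blast
    have "\<bar>birk g n x\<bar> \<le> (\<Sum>n\<le>N. \<bar>birk g n x\<bar>)"
      using n(1) by (intro member_le_sum) auto
    then show "norm (mx g N x) \<le> norm (\<Sum>n\<le>N. \<bar>birk g n x\<bar>)"
      using n(2) mx_nonneg[of g N x] by simp
  qed
qed

lemma maximal_ergodic:
  assumes g: "integrable M g"
  shows "0 \<le> integral\<^sup>L M (\<lambda>x. indicator {x. 0 < mx g N x} x * g x)"
proof -
  have gm[measurable]: "g \<in> borel_measurable M" using g by auto
  have MI: "integrable M (mx g N)" by (rule mx_integrable[OF g])
  have MTI: "integrable M (\<lambda>x. mx g N ((T^^1) x))" by (rule integrable_Tn[OF MI])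
  have eq: "integral\<^sup>L M (\<lambda>x. mx g N ((T^^1) x)) = integral\<^sup>L M (mx g N)"
    by (rule integral_Tn) measurable
  have pw: "mx g N x - mx g N (T x) \<le> indicator {x. 0 < mx g N x} x * g x" for x
  proof (cases "0 < mx g N x")
    case True
    obtain n where n: "n \<le> N" "mx g N x = birk g n x" using mx_attained by blast
    have "n \<noteq> 0"
    proof
      assume "n = 0" then show False using True n by simp
    qed
    then obtain m where m: "n = Suc m" by (cases n) auto
    have "mx g N x = g x + birk g m (T x)" using n m birk_Suc by simp
    also have "\<dots> \<le> g x + mx g N (T x)" using mx_ge[of m N g "T x"] n m by simp
    finally show ?thesis using True by simp
  next
    case False
    then have "mx g N x = 0" using mx_nonneg[of g N x] by simp
    then show ?thesis using False mx_nonneg[of g N "T x"] by simp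
  qed
  have I2: "integrable M (\<lambda>x. indicator {x. 0 < mx g N x} x * g x)"
  proof (rule Bochner_Integration.integrable_bound[where f = "\<lambda>x. \<bar>g x\<bar>"])
    show "integrable M (\<lambda>x. \<bar>g x\<bar>)" using g by auto
    show "(\<lambda>x. indicator {x. 0 < mx g N x} x * g x) \<in> borel_measurable M" by measurable
    show "AE x in M. norm (indicator {x. 0 < mx g N x} x * g x) \<le> norm \<bar>g x\<bar>"
      by (intro AE_I2) (auto simp: indicator_def)
  qed
  have "0 = integral\<^sup>L M (mx g N) - integral\<^sup>L M (\<lambda>x. mx g N ((T^^1) x))" using eq by simp
  also have "\<dots> = integral\<^sup>L M (\<lambda>x. mx g N x - mx g N (T x))"
    using MI MTI by simp
  also have "\<dots> \<le> integral\<^sup>L M (\<lambda>x. indicator {x. 0 < mx g N x} x * g x)"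
    using MI MTI I2 pw by (intro integral_mono) auto
  finally show ?thesis .
qed

end

locale empt = mpt +
  assumes erg: "\<And>B. B \<in> sets M \<Longrightarrow> T -` B \<inter> space M = B \<Longrightarrow> prob B = 0 \<or> prob B = 1"
begin

lemma birk_upper:
  assumes h: "integrable M h" and c: "integral\<^sup>L M h < c"
  shows "AE x in M. \<exists>N. \<forall>n\<ge>N. birk h n x \<le> c * n"
proof -
  define c' where "c' = (integral\<^sup>L M h + c) / 2"
  have c'1: "integral\<^sup>L M h < c'" and c'2: "c' < c" using c unfolding c'_def by auto
  define g where "g x = h x - c'" for x
  have gi: "integrable M g" unfolding g_def using h by auto
  have [measurable]: "g \<in> borel_measurable M" using gi by auto
  have gint: "integral\<^sup>L M g < 0" unfolding g_def using h c'1 by (simp add: prob_space)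
  have bg: "birk g n x = birk h n x - c' * n" for n x
    unfolding g_def by (rule birk_diff)
  define E where "E = {x \<in> space M. \<forall>C::nat. \<exists>n::nat. real C < birk g n x}"
  have Em: "E \<in> sets M" unfolding E_def by measurable
  have inv: "T -` E \<inter> space M = E"
  proof (intro set_eqI iffI)
    fix x assume "x \<in> T -` E \<inter> space M"
    then have x: "x \<in> space M" and Tx: "\<forall>C::nat. \<exists>n. real C < birk g n (T x)"
      unfolding E_def by auto
    have "\<exists>n. real C < birk g n x" for C :: nat
    proof -
      obtain C' :: nat where C': "real C - g x \<le> real C'"
        using real_nat_ceiling_ge by blast
      obtain n where "real C' < birk g n (T x)" using Tx by blast
      then have "real C < birk g (Suc n) x" using C' birk_Suc[of g n x] by simp
      then show ?thesis by blast
    qed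
    then show "x \<in> E" unfolding E_def using x by auto
  next
    fix x assume "x \<in> E"
    then have x: "x \<in> space M" and X: "\<forall>C::nat. \<exists>n. real C < birk g n x"
      unfolding E_def by auto
    have Tx: "T x \<in> space M" using x Tm measurable_space by metis
    have "\<exists>n. real C < birk g n (T x)" for C :: nat
    proof -
      obtain C' :: nat where C': "real C + \<bar>g x\<bar> \<le> real C'"
        using real_nat_ceiling_ge by blast
      obtain n where n: "real C' < birk g n x" using X by blast
      have "n \<noteq> 0" using n by (cases n) auto
      then obtain m where m: "n = Suc m" by (cases n) auto
      then have "real C < birk g m (T x)" using n C' birk_Suc[of g m x] by simp
      then show ?thesis by blast
    qed
    then show "x \<in> T -` E \<inter> space M" unfolding E_def using x Tx by auto
  qed
  have "prob E = 0 \<or> prob E = 1" by (rule erg[OF Em inv])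
  moreover have "prob E \<noteq> 1"
  proof
    assume P1: "prob E = 1"
    define F where "F N = {x. 0 < mx g N x}" for N
    define s where "s N x = indicator (F N) x * g x" for N x
    have lim: "(\<lambda>N. integral\<^sup>L M (s N)) \<longlonglongrightarrow> integral\<^sup>L M g"
    proof (rule integral_dominated_convergence[where w = "\<lambda>x. \<bar>g x\<bar>"])
      show "g \<in> borel_measurable M" by measurable
      show "s N \<in> borel_measurable M" for N unfolding s_def F_def by measurable
      show "integrable M (\<lambda>x. \<bar>g x\<bar>)" using gi by auto
      show "AE x in M. norm (s N x) \<le> \<bar>g x\<bar>" for N
        unfolding s_def by (intro AE_I2) (auto simp: indicator_def)
      show "AE x in M. (\<lambda>N. s N x) \<longlonglongrightarrow> g x"
        using AE_prob_1[OF P1]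
      proof eventually_elim
        case (elim x)
        then have "\<exists>n. real 0 < birk g n x" unfolding E_def by blast
        then obtain n where n: "0 < birk g n x" by auto
        have "eventually (\<lambda>N. s N x = g x) sequentially"
        proof (rule eventually_sequentiallyI[of n])
          fix N assume "n \<le> N"
          then have "0 < mx g N x" using n mx_ge[of n N g x] by simp
          then show "s N x = g x" unfolding s_def F_def by simp
        qed
        then show ?case by (rule tendsto_eventually)
      qed
    qed
    have "\<And>N. 0 \<le> integral\<^sup>L M (s N)"
      unfolding s_def F_def by (rule maximal_ergodic[OF gi])
    then have "0 \<le> integral\<^sup>L M g" using lim by (intro LIMSEQ_le_const) auto
    then show False using gint by simp
  qed
  ultimately have P0: "prob E = 0" by simp
  have "AE x in M. x \<notin> E"
    using Em P0 by (intro AE_not_in) (simp add: emeasure_eq_measure null_sets_def)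
  then show ?thesis
  proof (rule AE_mp[OF _ AE_I2], intro impI)
    fix x assume x: "x \<in> space M" "x \<notin> E"
    then have "\<not> (\<forall>C::nat. \<exists>n. real C < birk g n x)" unfolding E_def by blast
    then obtain C :: nat where C0: "\<forall>n. \<not> real C < birk g n x" by blast
    then have C: "\<And>n. birk g n x \<le> real C" by (simp add: not_less)
    obtain N :: nat where N: "real C / (c - c') \<le> real N" using real_nat_ceiling_ge by blast
    have "birk h n x \<le> c * n" if "N \<le> n" for n
    proof -
      have "birk h n x \<le> c' * n + C" using C[of n] bg[of n x] by simp
      also have "real C \<le> (c - c') * n"
      proof -
        have "real C \<le> (c - c') * real N" using N c'2 by (simp add: field_simps)
        also have "\<dots> \<le> (c - c') * n" using that c'2 by (intro mult_left_mono) auto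
        finally show ?thesis .
      qed
      finally show ?thesis by (simp add: algebra_simps)
    qed
    then show "\<exists>N. \<forall>n\<ge>N. birk h n x \<le> c * n" by blast
  qed
qed

lemma birk_lower:
  assumes h: "integrable M h" and c: "c < integral\<^sup>L M h"
  shows "AE x in M. \<exists>N. \<forall>n\<ge>N. c * n \<le> birk h n x"
proof -
  have "AE x in M. \<exists>N. \<forall>n\<ge>N. birk (\<lambda>x. - h x) n x \<le> (-c) * n"
    using h c by (intro birk_upper) auto
  then show ?thesis by eventually_elim (simp add: birk_minus)
qed

end


lemma reindex_phase:
  fixes G :: "nat \<Rightarrow> real"
  assumes K: "0 < K"
  shows "(\<Sum>p<K. \<Sum>q<(len-p) div K. G (p+q*K)) = (\<Sum>b\<in>{b. b + K \<le> len}. G b)"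
proof -
  have "(\<Sum>p<K. \<Sum>q<(len-p) div K. G (p+q*K)) = (\<Sum>(p,q)\<in>(SIGMA p:{..<K}. {..<(len-p) div K}). G (p+q*K))"
    by (rule sum.Sigma) auto
  also have "\<dots> = (\<Sum>b\<in>{b. b + K \<le> len}. G b)"
  proof -
    have H2: "p + q*K \<in> {b. b + K \<le> len}" if "p < K" "q < (len-p) div K" for p q
    proof -
      have "Suc q * K \<le> len - p" using that(2) less_eq_div_iff_mult_less_eq[OF K, of "Suc q" "len - p"] by simp
      then show ?thesis using that by auto
    qed
    have H4: "(b mod K, b div K) \<in> (SIGMA p:{..<K}. {..<(len-p) div K})" if b: "b \<in> {b. b + K \<le> len}" for b
    proof -
      have m: "b mod K < K" using K by simp
      have e: "b div K * K + b mod K = b" by simp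
      have e2: "Suc (b div K) * K + b mod K = b + K" using e by (metis add.commute add.left_commute mult_Suc)
      have bb: "b + K \<le> len" using b by simp
      have l1: "Suc (b div K) * K + b mod K \<le> len" using bb e2 by linarith
      have l2: "b mod K \<le> len" using bb mod_less_eq_dividend[of b K] by linarith
      have "Suc (b div K) * K \<le> len - b mod K" using l1 l2 le_diff_conv2 by blast
      then have "b div K < (len - b mod K) div K"
        using less_eq_div_iff_mult_less_eq[OF K, of "Suc (b div K)" "len - b mod K"] by simp
      then show ?thesis using m by simp
    qed
    show ?thesis
      apply (rule sum.reindex_bij_witness[where j = "\<lambda>(p,q). p + q*K" and i = "\<lambda>b. (b mod K, b div K)"])
      using H2 H4 by auto
  qed
  finally show ?thesis .
qed

locale cocycle = empt +
  fixes a :: "nat \<Rightarrow> 'a \<Rightarrow> real"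
  assumes a_meas[measurable]: "\<And>n. a n \<in> borel_measurable M"
  and a0: "\<And>x. x \<in> space M \<Longrightarrow> a 0 x = 0"
  and a_sub: "\<And>n m. 0 < n \<Longrightarrow> 0 < m \<Longrightarrow> AE x in M. a (n+m) x \<le> a n x + a m ((T^^n) x)"
  and a_int: "\<And>n. integrable M (a n)"
  and a_pos: "\<And>n. 0 \<le> integral\<^sup>L M (a n)"
  and a_inf: "\<And>\<tau>::real. 0 < \<tau> \<Longrightarrow> \<exists>K\<ge>1. integral\<^sup>L M (a K) \<le> \<tau> * real K"
begin

definition good where
  "good x \<longleftrightarrow> x \<in> space M \<and> (\<forall>n m j. 0 < n \<longrightarrow> 0 < m \<longrightarrow>
     a (n+m) ((T^^j) x) \<le> a n ((T^^j) x) + a m ((T^^n) ((T^^j) x)))"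

lemma AE_good: "AE x in M. good x"
proof -
  have "AE x in M. \<forall>n m j. 0 < n \<longrightarrow> 0 < m \<longrightarrow>
     a (n+m) ((T^^j) x) \<le> a n ((T^^j) x) + a m ((T^^n) ((T^^j) x))"
  proof (subst AE_all_countable, intro allI, subst AE_all_countable, intro allI,
         subst AE_all_countable, intro allI)
    fix n m j :: nat
    show "AE x in M. 0 < n \<longrightarrow> 0 < m \<longrightarrow>
     a (n+m) ((T^^j) x) \<le> a n ((T^^j) x) + a m ((T^^n) ((T^^j) x))"
    proof (cases "0 < n \<and> 0 < m")
      case True
      then show ?thesis using AE_Tn[OF a_sub[of n m], of j] by auto
    qed auto
  qed
  then show ?thesis unfolding good_def using AE_space by eventually_elim auto
qed

lemma good_space: "good x \<Longrightarrow> x \<in> space M" unfolding good_def by simp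

lemma good_shift: "good x \<Longrightarrow> good ((T^^k) x)"
  unfolding good_def using Tn_space by (auto simp: Tn_add[symmetric])

lemma good_sub: "good y \<Longrightarrow> a (p+q) y \<le> a p y + a q ((T^^p) y)"
proof -
  assume g: "good y"
  have sp: "(T^^p) y \<in> space M" using g good_space Tn_space by auto
  show ?thesis
  proof (cases "p = 0 \<or> q = 0")
    case True then show ?thesis using a0 sp good_space[OF g] by auto
  next
    case False then show ?thesis using g unfolding good_def by (metis funpow_0 neq0_conv)
  qed
qed

definition f1 where "f1 x = \<bar>a 1 x\<bar>"

lemma f1_int: "integrable M f1" unfolding f1_def using a_int[of 1] by auto
lemma f1_meas[measurable]: "f1 \<in> borel_measurable M" unfolding f1_def by measurable
lemma f1_nonneg: "0 \<le> f1 x" unfolding f1_def by simp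

lemma singles: "good y \<Longrightarrow> a r y \<le> birk f1 r y"
proof (induction r)
  case 0 then show ?case using a0 good_space by simp
next
  case (Suc r)
  have "a (r + 1) y \<le> a r y + a 1 ((T^^r) y)" by (rule good_sub[OF Suc.prems])
  also have "\<dots> \<le> birk f1 r y + f1 ((T^^r) y)"
  proof -
    have "a 1 ((T^^r) y) \<le> f1 ((T^^r) y)" unfolding f1_def by simp
    then show ?thesis using Suc.IH[OF Suc.prems] by linarith
  qed
  finally show ?case by (simp add: birk_Suc_right)
qed

lemma blocks: "good y \<Longrightarrow> a (Q*K) y \<le> (\<Sum>q<Q. a K ((T^^(q*K)) y))"
proof (induction Q)
  case 0 then show ?case using a0 good_space by simp
next
  case (Suc Q)
  have "a (Q*K + K) y \<le> a (Q*K) y + a K ((T^^(Q*K)) y)" by (rule good_sub[OF Suc.prems])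
  then show ?case using Suc by (simp add: add.commute)
qed

definition W :: "nat \<Rightarrow> nat \<Rightarrow> nat set" where
  "W K len = {i. i < len \<and> (i < K \<or> len < i + K)}"

lemma W_fin: "finite (W K len)" unfolding W_def by auto

lemma W_card: "card (W K len) \<le> 2 * K"
proof -
  have "W K len \<subseteq> {..<K} \<union> {len - K..<len}" unfolding W_def by auto
  then have "card (W K len) \<le> card ({..<K} \<union> {len - K..<len})" by (intro card_mono) auto
  also have "\<dots> \<le> card {..<K} + card {len - K..<len}" by (rule card_Un_le)
  also have "\<dots> \<le> 2 * K" by simp
  finally show ?thesis .
qed

lemma one_phase:
  assumes g: "good y" and pK: "p < K"
  shows "a len y \<le> (\<Sum>q<(len-p) div K. a K ((T^^(p+q*K)) y)) + (\<Sum>i\<in>W K len. f1 ((T^^i) y))"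
proof (cases "p \<le> len")
  case False
  then have "a len y \<le> birk f1 len y" using singles[OF g] by simp
  also have "\<dots> \<le> (\<Sum>i\<in>W K len. f1 ((T^^i) y))"
    unfolding birk_def using False pK f1_nonneg
    by (intro sum_mono2[OF W_fin]) (auto simp: W_def)
  finally show ?thesis using False by simp
next
  case True
  define Q where "Q = (len - p) div K"
  define r where "r = (len - p) mod K"
  have K: "0 < K" using pK by simp
  have lenQ: "len = p + Q*K + r" unfolding Q_def r_def using True by simp
  have rK: "r < K" unfolding r_def using K by simp
  have gp: "good ((T^^p) y)" "good ((T^^(p+Q*K)) y)" using good_shift[OF g] by auto
  have "a len y \<le> a p y + a (Q*K + r) ((T^^p) y)"
    using good_sub[OF g, of p "Q*K+r"] lenQ by (simp add: add.assoc)
  also have "a (Q*K + r) ((T^^p) y) \<le> a (Q*K) ((T^^p) y) + a r ((T^^(Q*K)) ((T^^p) y))"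
    by (rule good_sub[OF gp(1)])
  also have "a (Q*K) ((T^^p) y) \<le> (\<Sum>q<Q. a K ((T^^(q*K)) ((T^^p) y)))"
    by (rule blocks[OF gp(1)])
  also have "\<dots> = (\<Sum>q<Q. a K ((T^^(p+q*K)) y))" by (simp add: Tn_add2 add.commute)
  also have "a r ((T^^(Q*K)) ((T^^p) y)) \<le> birk f1 r ((T^^(p+Q*K)) y)"
    using singles[OF gp(2)] by (simp add: Tn_add2 add.commute)
  also have "a p y \<le> birk f1 p y" by (rule singles[OF g])
  finally have A: "a len y \<le> birk f1 p y + (\<Sum>q<Q. a K ((T^^(p+q*K)) y)) + birk f1 r ((T^^(p+Q*K)) y)"
    by simp
  have B1: "birk f1 p y = (\<Sum>i\<in>{..<p}. f1 ((T^^i) y))" by (simp add: birk_def)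
  have B2: "birk f1 r ((T^^(p+Q*K)) y) = (\<Sum>i\<in>{p+Q*K..<len}. f1 ((T^^i) y))"
  proof -
    have "birk f1 r ((T^^(p+Q*K)) y) = (\<Sum>i<r. f1 ((T^^(i + (p+Q*K))) y))"
      by (simp add: birk_def funpow_add)
    also have "\<dots> = (\<Sum>i\<in>{p+Q*K..<p+Q*K+r}. f1 ((T^^i) y))"
      by (rule sum.reindex_bij_witness[where j = "\<lambda>i. i + (p+Q*K)" and i = "\<lambda>i. i - (p+Q*K)"]) auto
    finally show ?thesis using lenQ by simp
  qed
  have "birk f1 p y + birk f1 r ((T^^(p+Q*K)) y) = (\<Sum>i\<in>{..<p} \<union> {p+Q*K..<len}. f1 ((T^^i) y))"
    unfolding B1 B2 by (rule sum.union_disjoint[symmetric]) auto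
  also have "\<dots> \<le> (\<Sum>i\<in>W K len. f1 ((T^^i) y))"
    using pK True lenQ rK f1_nonneg
    by (intro sum_mono2[OF W_fin]) (auto simp: W_def)
  finally show ?thesis using A unfolding Q_def by simp
qed

lemma phase:
  assumes g: "good y" and K: "0 < K"
  shows "K * a len y \<le> (\<Sum>b\<in>{b. b + K \<le> len}. a K ((T^^b) y)) + K * (\<Sum>i\<in>W K len. f1 ((T^^i) y))"
proof -
  have "K * a len y = (\<Sum>p<K. a len y)" by simp
  also have "\<dots> \<le> (\<Sum>p<K. (\<Sum>q<(len-p) div K. a K ((T^^(p+q*K)) y)) + (\<Sum>i\<in>W K len. f1 ((T^^i) y)))"
    by (intro sum_mono one_phase[OF g]) auto
  also have "\<dots> = (\<Sum>p<K. \<Sum>q<(len-p) div K. a K ((T^^(p+q*K)) y)) + K * (\<Sum>i\<in>W K len. f1 ((T^^i) y))"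
    by (simp add: sum.distrib)
  also have "(\<Sum>p<K. \<Sum>q<(len-p) div K. a K ((T^^(p+q*K)) y)) = (\<Sum>b\<in>{b. b + K \<le> len}. a K ((T^^b) y))"
    by (rule reindex_phase[OF K])
  finally show ?thesis .
qed

end


context cocycle begin

lemma sum_W_bound:
  assumes "K \<le> n"
  shows "(\<Sum>i\<in>W K n. f1 ((T^^i) x)) \<le> (\<Sum>i<K. f1 ((T^^i) x)) + (birk f1 n x - birk f1 (n-K) x)"
proof -
  have "(\<Sum>i\<in>W K n. f1 ((T^^i) x)) \<le> (\<Sum>i\<in>{..<K} \<union> {n-K..<n}. f1 ((T^^i) x))"
    using f1_nonneg by (intro sum_mono2) (auto simp: W_def)
  also have "\<dots> = (\<Sum>i<K. f1 ((T^^i) x)) + (\<Sum>i\<in>{n-K..<n}. f1 ((T^^i) x))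
       - (\<Sum>i\<in>{..<K} \<inter> {n-K..<n}. f1 ((T^^i) x))"
    by (rule sum_Un) auto
  also have "\<dots> \<le> (\<Sum>i<K. f1 ((T^^i) x)) + (\<Sum>i\<in>{n-K..<n}. f1 ((T^^i) x))"
    using f1_nonneg sum_nonneg[of "{..<K} \<inter> {n-K..<n}" "\<lambda>i. f1 ((T^^i) x)"] by simp
  also have "(\<Sum>i\<in>{n-K..<n}. f1 ((T^^i) x)) = birk f1 n x - birk f1 (n-K) x"
  proof -
    have "{..<n} = {..<n-K} \<union> {n-K..<n}" using assms by auto
    then have "birk f1 n x = (\<Sum>i\<in>{..<n-K} \<union> {n-K..<n}. f1 ((T^^i) x))"
      unfolding birk_def by simp
    also have "\<dots> = birk f1 (n-K) x + (\<Sum>i\<in>{n-K..<n}. f1 ((T^^i) x))"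
      unfolding birk_def by (rule sum.union_disjoint) auto
    finally have "birk f1 n x = birk f1 (n-K) x + (\<Sum>i\<in>{n-K..<n}. f1 ((T^^i) x))" .
    then show ?thesis by simp
  qed
  finally show ?thesis by simp
qed

lemma kingman_upper:
  fixes \<epsilon> :: real
  assumes e: "0 < \<epsilon>"
  shows "AE x in M. \<exists>N. \<forall>n\<ge>N. a n x \<le> \<epsilon> * real n"
proof -
  obtain K where K: "K \<ge> 1" "integral\<^sup>L M (a K) \<le> (\<epsilon>/4) * real K" using a_inf[of "\<epsilon>/4"] e by auto
  have Kr: "real K \<ge> 1" using K by simp
  define Ef where "Ef = integral\<^sup>L M f1"
  have h1: "AE x in M. \<exists>N. \<forall>m\<ge>N. birk (a K) m x \<le> (\<epsilon>/2 * real K) * real m"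
  proof (intro birk_upper[OF a_int])
    have "0 < \<epsilon> * real K" using e Kr by simp
    then show "integral\<^sup>L M (a K) < \<epsilon> / 2 * real K" using K(2) by linarith
  qed
  have h2: "AE x in M. \<exists>N. \<forall>m\<ge>N. birk f1 m x \<le> (Ef + \<epsilon>/8) * real m"
    using e by (intro birk_upper[OF f1_int]) (auto simp: Ef_def)
  have h3: "AE x in M. \<exists>N. \<forall>m\<ge>N. (Ef - \<epsilon>/8) * real m \<le> birk f1 m x"
    using e by (intro birk_lower[OF f1_int]) (auto simp: Ef_def)
  show ?thesis using h1 h2 h3 AE_good
  proof eventually_elim
    case (elim x)
    obtain N1 where N1: "\<And>m. m \<ge> N1 \<Longrightarrow> birk (a K) m x \<le> (\<epsilon>/2 * real K) * real m" using elim(1) by auto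
    obtain N2 where N2: "\<And>m. m \<ge> N2 \<Longrightarrow> birk f1 m x \<le> (Ef + \<epsilon>/8) * real m" using elim(2) by auto
    obtain N3 where N3: "\<And>m. m \<ge> N3 \<Longrightarrow> (Ef - \<epsilon>/8) * real m \<le> birk f1 m x" using elim(3) by auto
    define C0 where "C0 = (\<Sum>i<K. f1 ((T^^i) x))"
    obtain N4 :: nat where N4: "4 * (C0 + real K * Ef) / \<epsilon> \<le> real N4" using real_nat_ceiling_ge by blast
    have "a n x \<le> \<epsilon> * real n" if n: "n \<ge> N1 + N2 + N3 + N4 + K" for n
    proof -
      have nK: "K \<le> n" using n by simp
      have P: "real K * a n x \<le> (\<Sum>b\<in>{b. b + K \<le> n}. a K ((T^^b) x)) + real K * (\<Sum>i\<in>W K n. f1 ((T^^i) x))"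
        using phase[OF elim(4)] K by simp
      have "{b. b + K \<le> n} = {..<n+1-K}" using K nK by auto
      then have S1: "(\<Sum>b\<in>{b. b + K \<le> n}. a K ((T^^b) x)) = birk (a K) (n+1-K) x"
        by (simp add: birk_def)
      have "birk (a K) (n+1-K) x \<le> (\<epsilon>/2 * real K) * real (n+1-K)" using N1[of "n+1-K"] n by linarith
      also have "\<dots> \<le> (\<epsilon>/2 * real K) * real n" using e K nK by (intro mult_left_mono) auto
      finally have S1': "birk (a K) (n+1-K) x \<le> (\<epsilon>/2 * real K) * real n" .
      have S2: "(\<Sum>i\<in>W K n. f1 ((T^^i) x)) \<le> C0 + (birk f1 n x - birk f1 (n-K) x)"
        unfolding C0_def by (rule sum_W_bound[OF nK])
      have B2: "birk f1 n x \<le> (Ef + \<epsilon>/8) * real n" using N2[of n] n by linarith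
      have B3: "(Ef - \<epsilon>/8) * real (n-K) \<le> birk f1 (n-K) x" using N3[of "n-K"] n by linarith
      have rnK: "real (n - K) = real n - real K" using nK by simp
      have Efn: "0 \<le> Ef" unfolding Ef_def using f1_nonneg by simp
      have "real K * a n x \<le> real K * (\<epsilon>/2 * real n) + real K * (C0 + (Ef + \<epsilon>/8) * real n - (Ef - \<epsilon>/8) * (real n - real K))"
      proof -
        have "real K * (C0 + (birk f1 n x - birk f1 (n-K) x)) \<le> real K * (C0 + (Ef + \<epsilon>/8) * real n - (Ef - \<epsilon>/8) * (real n - real K))"
          using B2 B3 rnK Kr by (intro mult_left_mono) auto
        moreover have "real K * (\<Sum>i\<in>W K n. f1 ((T^^i) x)) \<le> real K * (C0 + (birk f1 n x - birk f1 (n-K) x))"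
          using S2 by (intro mult_left_mono) auto
        moreover have "(\<epsilon>/2 * real K) * real n = real K * (\<epsilon>/2 * real n)" by simp
        ultimately show ?thesis using P S1 S1' by linarith
      qed
      then have "real K * a n x \<le> real K * (\<epsilon>/2 * real n + (C0 + (Ef + \<epsilon>/8) * real n - (Ef - \<epsilon>/8) * (real n - real K)))"
        by (simp only: distrib_left)
      then have A1: "a n x \<le> \<epsilon>/2 * real n + (C0 + (Ef + \<epsilon>/8) * real n - (Ef - \<epsilon>/8) * (real n - real K))"
        using Kr mult_le_cancel_left_pos[of "real K"] by simp
      have "C0 + (Ef + \<epsilon>/8) * real n - (Ef - \<epsilon>/8) * (real n - real K) = C0 + \<epsilon>/4 * real n + real K * Ef - \<epsilon>/8 * real K"
        by (simp add: field_simps)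
      also have "\<dots> \<le> \<epsilon>/4 * real n + (C0 + real K * Ef)" using e by simp
      also have "C0 + real K * Ef \<le> \<epsilon>/4 * real n"
      proof -
        have "4 * (C0 + real K * Ef) / \<epsilon> \<le> real n" using N4 n by linarith
        then show ?thesis using e by (simp add: field_simps)
      qed
      finally show ?thesis using A1 by linarith
    qed
    then show ?case by blast
  qed
qed

definition Sup_set :: "real \<Rightarrow> nat \<Rightarrow> 'a set" where "Sup_set \<epsilon> L = {x\<in>space M. \<exists>n\<ge>L. \<epsilon> * n < a n x}"

lemma Sup_set_meas[measurable]: "Sup_set \<epsilon> L \<in> sets M"
  unfolding Sup_set_def by measurable

lemma kingman_measure:
  fixes \<epsilon> \<eta> :: real
  assumes e: "0 < \<epsilon>" and h: "0 < \<eta>"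
  shows "eventually (\<lambda>L. measure M (Sup_set \<epsilon> L) < \<eta>) sequentially"
proof -
  have dec: "decseq (Sup_set \<epsilon>)" unfolding decseq_def Sup_set_def by (intro allI impI subsetI) (auto intro: order_trans)
  have "AE x in M. x \<notin> (\<Inter>L. Sup_set \<epsilon> L)"
    using kingman_upper[OF e]
  proof eventually_elim
    case (elim x)
    then obtain N where "\<forall>n\<ge>N. a n x \<le> \<epsilon> * n" by auto
    then have "x \<notin> Sup_set \<epsilon> N" unfolding Sup_set_def by force
    then show ?case by blast
  qed
  moreover have "(\<Inter>L. Sup_set \<epsilon> L) \<in> sets M" by measurable
  ultimately have "emeasure M (\<Inter>L. Sup_set \<epsilon> L) = 0"
    using AE_iff_measurable[of "\<Inter>L. Sup_set \<epsilon> L" M "\<lambda>x. x \<notin> (\<Inter>L. Sup_set \<epsilon> L)"]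
    by (auto simp: Sup_set_def)
  then have m0: "measure M (\<Inter>L. Sup_set \<epsilon> L) = 0" by (simp add: measure_def)
  have "(\<lambda>L. measure M (Sup_set \<epsilon> L)) \<longlonglongrightarrow> measure M (\<Inter>L. Sup_set \<epsilon> L)"
    using dec by (intro Lim_measure_decseq) auto
  then show ?thesis using m0 h by (simp add: order_tendsto_iff)
qed

end


context cocycle begin

lemma kingman_D:
  fixes \<eta> :: real
  assumes h: "0 < \<eta>"
  shows "\<exists>D\<ge>1. measure M {x\<in>space M. \<exists>n\<ge>1. D * real n < a n x} < \<eta>"
proof -
  obtain L where L: "measure M (Sup_set 1 L) < \<eta>/2"
    using eventually_sequentially kingman_measure[of 1 "\<eta>/2"] h by fastforce
  define R where "R d = {x\<in>space M. \<exists>n<L. real d * real n < a n x \<and> 1 \<le> n}" for d :: nat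
  have Rm[measurable]: "R d \<in> sets M" for d unfolding R_def by measurable
  have dec: "decseq R"
  proof (unfold decseq_def, intro allI impI subsetI)
    fix d d' x assume dd: "d \<le> d'" and x: "x \<in> R d'"
    then obtain n where n: "n < L" "real d' * real n < a n x" "1 \<le> n" "x \<in> space M" unfolding R_def by auto
    have "real d * real n \<le> real d' * real n" using dd by (intro mult_right_mono) auto
    then have "real d * real n < a n x" using n by linarith
    then show "x \<in> R d" using n unfolding R_def by auto
  qed
  have empty: "(\<Inter>d. R d) = {}"
  proof (rule ccontr)
    assume "(\<Inter>d. R d) \<noteq> {}"
    then obtain x where x: "\<And>d. x \<in> R d" by auto
    obtain d :: nat where d: "(\<Sum>n<L. \<bar>a n x\<bar>) \<le> real d" using real_nat_ceiling_ge by blast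
    obtain n where n: "n < L" "real d * real n < a n x" "1 \<le> n" using x[of d] unfolding R_def by auto
    have "\<bar>a n x\<bar> \<le> (\<Sum>n<L. \<bar>a n x\<bar>)" using n(1) by (intro member_le_sum) auto
    moreover have "real d * 1 \<le> real d * real n" using n(3) by (intro mult_left_mono) auto
    ultimately show False using n(2) d by linarith
  qed
  have "(\<lambda>d. measure M (R d)) \<longlonglongrightarrow> measure M (\<Inter>d. R d)"
    using dec by (intro Lim_measure_decseq) auto
  then have "(\<lambda>d. measure M (R d)) \<longlonglongrightarrow> 0" using empty by simp
  then have "\<forall>u>0. eventually (\<lambda>d. measure M (R d) < u) sequentially"
    by (simp add: order_tendsto_iff)
  then have "eventually (\<lambda>d. measure M (R d) < \<eta>/2) sequentially"
    using h by (meson half_gt_zero)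
  then obtain d0 where d0: "\<And>d. d \<ge> d0 \<Longrightarrow> measure M (R d) < \<eta>/2"
    unfolding eventually_sequentially by auto
  define d where "d = d0 + 1"
  have sub: "{x\<in>space M. \<exists>n\<ge>1. real d * real n < a n x} \<subseteq> Sup_set 1 L \<union> R d"
  proof
    fix x assume "x \<in> {x\<in>space M. \<exists>n\<ge>1. real d * real n < a n x}"
    then obtain n where n: "x \<in> space M" "1 \<le> n" "real d * real n < a n x" by auto
    show "x \<in> Sup_set 1 L \<union> R d"
    proof (cases "n < L")
      case True then show ?thesis using n unfolding R_def by auto
    next
      case False
      have "real n \<le> real d * real n" unfolding d_def by (simp add: algebra_simps)
      then have "1 * real n < a n x" using n by linarith
      then show ?thesis using n False unfolding Sup_set_def by (auto intro!: exI[of _ n])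
    qed
  qed
  have "measure M {x\<in>space M. \<exists>n\<ge>1. real d * real n < a n x} \<le> measure M (Sup_set 1 L \<union> R d)"
    using sub by (intro finite_measure_mono) auto
  also have "\<dots> \<le> measure M (Sup_set 1 L) + measure M (R d)"
    by (intro measure_Un_le) auto
  also have "\<dots> < \<eta>" using L d0[of d] unfolding d_def by simp
  finally show ?thesis unfolding d_def by (intro exI[of _ "real (d0 + 1)"]) auto
qed

lemma trunc_small:
  fixes \<theta> :: real
  assumes "0 < \<theta>"
  shows "\<exists>Mc\<ge>0. integral\<^sup>L M (\<lambda>x. max 0 (f1 x - Mc)) < \<theta>"
proof -
  define s where "s N x = max 0 (f1 x - real N)" for N :: nat and x
  have "(\<lambda>N. integral\<^sup>L M (s N)) \<longlonglongrightarrow> integral\<^sup>L M (\<lambda>x. 0)"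
  proof (rule integral_dominated_convergence[where w = f1])
    show "(\<lambda>x. 0::real) \<in> borel_measurable M" by simp
    show "s N \<in> borel_measurable M" for N unfolding s_def by measurable
    show "integrable M f1" by (rule f1_int)
    show "AE x in M. norm (s N x) \<le> f1 x" for N unfolding s_def using f1_nonneg by (intro AE_I2) auto
    show "AE x in M. (\<lambda>N. s N x) \<longlonglongrightarrow> 0"
    proof (rule AE_I2)
      fix x
      obtain N0 :: nat where "f1 x \<le> real N0" using real_nat_ceiling_ge by blast
      then have "eventually (\<lambda>N. s N x = 0) sequentially"
        unfolding s_def eventually_sequentially by (intro exI[of _ N0]) auto
      then show "(\<lambda>N. s N x) \<longlonglongrightarrow> 0" by (rule tendsto_eventually)
    qed
  qed
  then have "eventually (\<lambda>N. integral\<^sup>L M (s N) < \<theta>) sequentially"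
    using assms by (simp add: order_tendsto_iff)
  then obtain N where "integral\<^sup>L M (s N) < \<theta>" unfolding eventually_sequentially by auto
  then show ?thesis unfolding s_def by (intro exI[of _ "real N"]) auto
qed

definition gK :: "nat \<Rightarrow> real \<Rightarrow> 'a \<Rightarrow> real" where
  "gK K \<epsilon> x = max 0 (a K x - \<epsilon> * real K)"

definition tr :: "real \<Rightarrow> 'a \<Rightarrow> real" where
  "tr Mc x = max 0 (f1 x - Mc)"

definition phi :: "nat \<Rightarrow> real \<Rightarrow> real \<Rightarrow> 'a \<Rightarrow> real" where
  "phi K Mc \<epsilon> x = gK K \<epsilon> x / real K + tr Mc x"

lemma gK_meas[measurable]: "gK K \<epsilon> \<in> borel_measurable M" unfolding gK_def by measurable
lemma tr_meas[measurable]: "tr Mc \<in> borel_measurable M" unfolding tr_def by measurable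
lemma gK_int: "integrable M (gK K \<epsilon>)" unfolding gK_def using a_int[of K] by auto
lemma tr_int: "integrable M (tr Mc)" unfolding tr_def using f1_int by auto
lemma phi_int: "integrable M (phi K Mc \<epsilon>)" unfolding phi_def using gK_int tr_int by auto
lemma gK_nonneg: "0 \<le> gK K \<epsilon> x" unfolding gK_def by simp
lemma tr_nonneg: "0 \<le> tr Mc x" unfolding tr_def by simp
lemma phi_nonneg: "0 \<le> phi K Mc \<epsilon> x" unfolding phi_def using gK_nonneg tr_nonneg by simp

lemma birk_nonneg: "(\<And>y. 0 \<le> h y) \<Longrightarrow> 0 \<le> birk h n x"
  unfolding birk_def by (intro sum_nonneg) auto

lemma gK_bound:
  assumes g: "good y" and e: "0 \<le> \<epsilon>" and Mc: "0 \<le> Mc"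
  shows "gK K \<epsilon> y \<le> indicator {x\<in>space M. \<epsilon> * real K < a K x} y * (real K * Mc) + birk (tr Mc) K y"
proof (cases "\<epsilon> * real K < a K y")
  case False
  then have "gK K \<epsilon> y = 0" unfolding gK_def by simp
  then show ?thesis using Mc tr_nonneg birk_nonneg[of "tr Mc" K y] by simp
next
  case True
  have "gK K \<epsilon> y \<le> a K y" unfolding gK_def using True e by simp
  also have "\<dots> \<le> birk f1 K y" by (rule singles[OF g])
  also have "\<dots> \<le> birk (\<lambda>x. Mc + tr Mc x) K y" unfolding tr_def by (intro birk_mono) auto
  also have "\<dots> = real K * Mc + birk (tr Mc) K y" by (simp add: birk_def sum.distrib)
  finally show ?thesis using True good_space[OF g] by simp
qed

lemma gK_int_bound:
  assumes e: "0 \<le> \<epsilon>" and Mc: "0 \<le> Mc"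
  shows "integral\<^sup>L M (gK K \<epsilon>) \<le> real K * Mc * measure M {x\<in>space M. \<epsilon> * real K < a K x} + real K * integral\<^sup>L M (tr Mc)"
proof -
  have S: "{x\<in>space M. \<epsilon> * real K < a K x} \<in> sets M" by measurable
  have I1: "integrable M (\<lambda>y. indicator {x\<in>space M. \<epsilon> * real K < a K x} y * (real K * Mc))"
    using S emeasure_finite[of "{x\<in>space M. \<epsilon> * real K < a K x}"]
    by (intro integrable_mult_left integrable_real_indicator) (auto simp: less_top[symmetric])
  have I2: "integrable M (\<lambda>y. indicator {x\<in>space M. \<epsilon> * real K < a K x} y * (real K * Mc) + birk (tr Mc) K y)"
    using I1 birk_integrable[OF tr_int] by auto
  have "integral\<^sup>L M (gK K \<epsilon>) \<le> integral\<^sup>L M (\<lambda>y. indicator {x\<in>space M. \<epsilon> * real K < a K x} y * (real K * Mc) + birk (tr Mc) K y)"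
    using AE_good gK_int I2
    by (intro integral_mono_AE) (auto intro!: gK_bound[OF _ e Mc] elim: AE_mp)
  also have "\<dots> = real K * Mc * measure M {x\<in>space M. \<epsilon> * real K < a K x} + real K * integral\<^sup>L M (tr Mc)"
    using birk_integral[OF tr_int[of Mc], of K] birk_integrable[OF tr_int] S I1
    by (subst Bochner_Integration.integral_add) auto
  finally show ?thesis .
qed

end


context cocycle begin

lemma integral_phi:
  "integral\<^sup>L M (phi K Mc \<epsilon>) = integral\<^sup>L M (gK K \<epsilon>) / real K + integral\<^sup>L M (tr Mc)"
  unfolding phi_def using gK_int tr_int by (simp add: Bochner_Integration.integral_add)

lemma phi_small:
  fixes \<epsilon> \<theta> :: real
  assumes e: "0 < \<epsilon>" and t: "0 < \<theta>"
  shows "\<exists>K Mc. 1 \<le> K \<and> 0 \<le> Mc \<and> integral\<^sup>L M (phi K Mc \<epsilon>) < \<theta>"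
proof -
  obtain Mc where Mc: "0 \<le> Mc" "integral\<^sup>L M (tr Mc) < \<theta>/4"
    using trunc_small[of "\<theta>/4"] t unfolding tr_def by auto
  define \<eta> where "\<eta> = \<theta> / (4 * (Mc + 1))"
  have eta: "0 < \<eta>" unfolding \<eta>_def using t Mc by simp
  obtain N where N: "\<And>L. L \<ge> N \<Longrightarrow> measure M (Sup_set \<epsilon> L) < \<eta>"
    using kingman_measure[OF e eta] unfolding eventually_sequentially by auto
  define K where "K = N + 1"
  have K1: "1 \<le> K" and Kr: "1 \<le> real K" unfolding K_def by auto
  have sub: "{x\<in>space M. \<epsilon> * real K < a K x} \<subseteq> Sup_set \<epsilon> K" unfolding Sup_set_def by auto
  have muK: "measure M {x\<in>space M. \<epsilon> * real K < a K x} < \<eta>"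
    using finite_measure_mono[OF sub] N[of K] unfolding K_def by fastforce
  have "integral\<^sup>L M (gK K \<epsilon>) \<le> real K * Mc * measure M {x\<in>space M. \<epsilon> * real K < a K x} + real K * integral\<^sup>L M (tr Mc)"
    by (rule gK_int_bound) (use e Mc in auto)
  then have "integral\<^sup>L M (gK K \<epsilon>) / real K \<le> Mc * measure M {x\<in>space M. \<epsilon> * real K < a K x} + integral\<^sup>L M (tr Mc)"
    using Kr by (simp add: field_simps)
  moreover have "Mc * measure M {x\<in>space M. \<epsilon> * real K < a K x} \<le> Mc * \<eta>"
    using muK Mc by (intro mult_left_mono) auto
  moreover have "Mc * \<eta> < \<theta>/4"
  proof -
    have "Mc * \<eta> = \<theta>/4 * (Mc / (Mc + 1))" unfolding \<eta>_def using Mc by (simp add: field_simps)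
    also have "\<dots> < \<theta>/4 * 1" using t Mc by (intro mult_strict_left_mono) auto
    finally show ?thesis by simp
  qed
  ultimately have "integral\<^sup>L M (phi K Mc \<epsilon>) < \<theta>"
    using Mc(2) integral_phi[of K Mc \<epsilon>] t by linarith
  then show ?thesis using K1 Mc(1) by blast
qed

lemma run_bound:
  assumes g: "good y" and K: "1 \<le> K" and Mc: "0 \<le> Mc" and e: "0 \<le> \<epsilon>"
  shows "a len y \<le> \<epsilon> * real len + 2 * real K * Mc + birk (phi K Mc \<epsilon>) len y"
proof -
  have Kr: "0 < real K" using K by simp
  define Bl where "Bl = {b. b + K \<le> len}"
  have Blsub: "Bl \<subseteq> {..<len}" unfolding Bl_def using K by auto
  have Blfin: "finite Bl" using Blsub finite_subset by blast
  have P: "real K * a len y \<le> (\<Sum>b\<in>Bl. a K ((T^^b) y)) + real K * (\<Sum>i\<in>W K len. f1 ((T^^i) y))"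
    unfolding Bl_def using phase[OF g] K by simp
  define G where "G = (\<Sum>b<len. gK K \<epsilon> ((T^^b) y))"
  define R where "R = (\<Sum>i<len. tr Mc ((T^^i) y))"
  have s1: "(\<Sum>b\<in>Bl. a K ((T^^b) y)) \<le> \<epsilon> * real K * real len + G"
  proof -
    have "(\<Sum>b\<in>Bl. a K ((T^^b) y)) \<le> (\<Sum>b\<in>Bl. \<epsilon> * real K + gK K \<epsilon> ((T^^b) y))"
      unfolding gK_def by (intro sum_mono) auto
    also have "\<dots> = \<epsilon> * real K * real (card Bl) + (\<Sum>b\<in>Bl. gK K \<epsilon> ((T^^b) y))"
      by (simp add: sum.distrib)
    also have "\<epsilon> * real K * real (card Bl) \<le> \<epsilon> * real K * real len"
    proof -
      have "card Bl \<le> card {..<len}" by (rule card_mono[OF _ Blsub]) auto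
      then show ?thesis using e Kr by (intro mult_left_mono) auto
    qed
    also have "(\<Sum>b\<in>Bl. gK K \<epsilon> ((T^^b) y)) \<le> G"
      unfolding G_def using Blsub gK_nonneg by (intro sum_mono2) auto
    finally show ?thesis by simp
  qed
  have s2: "(\<Sum>i\<in>W K len. f1 ((T^^i) y)) \<le> 2 * real K * Mc + R"
  proof -
    have Wsub: "W K len \<subseteq> {..<len}" unfolding W_def by auto
    have "(\<Sum>i\<in>W K len. f1 ((T^^i) y)) \<le> (\<Sum>i\<in>W K len. Mc + tr Mc ((T^^i) y))"
      unfolding tr_def by (intro sum_mono) auto
    also have "\<dots> = Mc * real (card (W K len)) + (\<Sum>i\<in>W K len. tr Mc ((T^^i) y))"
      by (simp add: sum.distrib mult.commute)
    also have "Mc * real (card (W K len)) \<le> Mc * (2 * real K)"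
    proof -
      have "real (card (W K len)) \<le> 2 * real K" using W_card[of K len] by linarith
      then show ?thesis using Mc by (intro mult_left_mono) auto
    qed
    also have "(\<Sum>i\<in>W K len. tr Mc ((T^^i) y)) \<le> R"
      unfolding R_def using Wsub tr_nonneg by (intro sum_mono2) auto
    finally show ?thesis by (simp add: algebra_simps)
  qed
  have "real K * a len y \<le> \<epsilon> * real K * real len + G + real K * (2 * real K * Mc + R)"
    using P s1 mult_left_mono[OF s2, of "real K"] Kr by linarith
  also have "\<dots> = real K * (\<epsilon> * real len + 2 * real K * Mc + (G / real K + R))"
    using Kr by (simp add: field_simps)
  finally have A: "a len y \<le> \<epsilon> * real len + 2 * real K * Mc + (G / real K + R)"
    using Kr by (simp add: mult_le_cancel_left_pos)
  have "birk (phi K Mc \<epsilon>) len y = G / real K + R"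
    unfolding birk_def phi_def G_def R_def by (simp add: sum.distrib sum_divide_distrib)
  then show ?thesis using A by simp
qed

end


context cocycle begin

definition LB :: "real \<Rightarrow> nat \<Rightarrow> nat \<Rightarrow> 'a set" where
  "LB \<tau> L m = {x\<in>space M. \<exists>l. L \<le> l \<and> l \<le> m \<and> a m x - a (m-l) ((T^^l) x) < -\<tau> * real l}"

lemma LB_meas[measurable]: "LB \<tau> L m \<in> sets M"
  unfolding LB_def by measurable

lemma path_bound:
  fixes \<tau> \<epsilon> Mc :: real and L K n :: nat
  assumes g: "good \<omega>" and tau: "0 < \<tau>" and L: "1 \<le> L" and K: "1 \<le> K" and Mc: "0 \<le> Mc"
    and e: "0 \<le> \<epsilon>" and cond: "4 * real K * Mc \<le> \<tau> * real L"
  shows "a n \<omega> \<le> -(\<tau>/2) * real (card {j. j < n \<and> (T^^j) \<omega> \<in> LB \<tau> L (n-j)})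
           + \<epsilon> * real n + birk (phi K Mc \<epsilon>) n \<omega> + 2 * real K * Mc"
proof -
  define bad where "bad j \<longleftrightarrow> j < n \<and> (T^^j) \<omega> \<in> LB \<tau> L (n-j)" for j
  define \<beta> where "\<beta> j = card {i. j \<le> i \<and> i < n \<and> bad i}" for j
  define \<phi> where "\<phi> = phi K Mc \<epsilon>"
  have phin: "\<And>x. 0 \<le> \<phi> x" unfolding \<phi>_def by (rule phi_nonneg)
  define Q where "Q j \<longleftrightarrow> a (n-j) ((T^^j) \<omega>) \<le> -(\<tau>/2) * real (\<beta> j) + \<epsilon> * real (n-j)
      + birk \<phi> (n-j) ((T^^j) \<omega>) + (if bad j \<or> j = n then 0 else 2 * real K * Mc)" for j
  have KMc: "0 \<le> 2 * real K * Mc" using Mc by simp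
  have main: "j \<le> n \<Longrightarrow> Q j" for j
  proof (induction j rule: measure_induct_rule[where f = "\<lambda>j. n - j"])
    case (less j)
    have gj: "good ((T^^j) \<omega>)" by (rule good_shift[OF g])
    show ?case
    proof (cases "j = n")
      case True
      have "\<beta> j = 0" unfolding \<beta>_def using True by simp
      then show ?thesis unfolding Q_def using True a0[OF good_space[OF gj]] by simp
    next
      case jn: False
      then have jlt: "j < n" using less.prems by simp
      show ?thesis
      proof (cases "bad j")
        case True
        then obtain l where l: "L \<le> l" "l \<le> n - j"
          "a (n-j) ((T^^j) \<omega>) - a (n-j-l) ((T^^l) ((T^^j) \<omega>)) < -\<tau> * real l"
          unfolding bad_def LB_def by auto
        define j' where "j' = j + l"
        have j'n: "j' \<le> n" and lt: "n - j' < n - j" using l L jlt unfolding j'_def by auto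
        have IH: "Q j'" using less.IH[OF lt j'n] .
        have Tj': "(T^^l) ((T^^j) \<omega>) = (T^^j') \<omega>" unfolding j'_def by (simp add: Tn_add2 add.commute)
        have nj': "n - j - l = n - j'" unfolding j'_def by simp
        have beta: "\<beta> j \<le> \<beta> j' + l"
        proof -
          have "{i. j \<le> i \<and> i < n \<and> bad i} \<subseteq> {j..<j'} \<union> {i. j' \<le> i \<and> i < n \<and> bad i}" by auto
          then have "\<beta> j \<le> card ({j..<j'} \<union> {i. j' \<le> i \<and> i < n \<and> bad i})"
            unfolding \<beta>_def by (intro card_mono) auto
          also have "\<dots> \<le> card {j..<j'} + \<beta> j'" unfolding \<beta>_def by (rule card_Un_le)
          finally show ?thesis unfolding j'_def by simp
        qed
        have birkeq: "birk \<phi> (n-j) ((T^^j) \<omega>) = birk \<phi> l ((T^^j) \<omega>) + birk \<phi> (n-j') ((T^^j') \<omega>)"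
        proof -
          have "n - j = l + (n - j')" using l unfolding j'_def by simp
          then show ?thesis using birk_add[of \<phi> l "n-j'" "(T^^j) \<omega>"] Tj' by simp
        qed
        have birkpos: "0 \<le> birk \<phi> l ((T^^j) \<omega>)" by (rule birk_nonneg[OF phin])
        have Q': "a (n-j') ((T^^j') \<omega>) \<le> -(\<tau>/2) * real (\<beta> j') + \<epsilon> * real (n-j')
            + birk \<phi> (n-j') ((T^^j') \<omega>) + 2 * real K * Mc"
        proof -
          have "(if bad j' \<or> j' = n then 0 else 2 * real K * Mc) \<le> 2 * real K * Mc" using KMc by simp
          then show ?thesis using IH unfolding Q_def by linarith
        qed
        have r1: "(\<tau>/2) * real (\<beta> j) \<le> (\<tau>/2) * (real (\<beta> j') + real l)"
          using beta tau by (intro mult_left_mono) auto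
        have r2: "\<tau> * real L \<le> \<tau> * real l" using l tau by (intro mult_left_mono) auto
        have r3: "\<epsilon> * real (n-j') \<le> \<epsilon> * real (n-j)" using e lt by (intro mult_left_mono) auto
        have "a (n-j) ((T^^j) \<omega>) \<le> -(\<tau>/2) * real (\<beta> j) + \<epsilon> * real (n-j) + birk \<phi> (n-j) ((T^^j) \<omega>)"
          using l(3) Q' r1 r2 r3 cond birkeq birkpos unfolding Tj' nj' by (simp add: algebra_simps)
        then show ?thesis unfolding Q_def using True by simp
      next
        case nb: False
        define P where "P k \<longleftrightarrow> j < k \<and> k \<le> n \<and> (bad k \<or> k = n)" for k
        define js where "js = (LEAST k. P k)"
        have Pn: "P n" unfolding P_def using jlt by simp
        have Pjs: "P js" unfolding js_def by (rule LeastI[of P n, OF Pn])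
        then have js: "j < js" "js \<le> n" "bad js \<or> js = n" unfolding P_def by auto
        have between: "\<not> bad i" if "j \<le> i" "i < js" for i
        proof
          assume bi: "bad i"
          show False
          proof (cases "i = j")
            case True then show False using nb bi by simp
          next
            case False
            then have "P i" unfolding P_def using that bi js by auto
            then show False using not_less_Least[of i P] that unfolding js_def by simp
          qed
        qed
        have beq: "\<beta> j = \<beta> js"
        proof -
          have "{i. j \<le> i \<and> i < n \<and> bad i} = {i. js \<le> i \<and> i < n \<and> bad i}"
            using between js by (auto simp: not_le[symmetric])
          then show ?thesis unfolding \<beta>_def by simp
        qed
        have lt: "n - js < n - j" using js by auto
        have IH: "Q js" using less.IH[OF lt js(2)] .
        have Q': "a (n-js) ((T^^js) \<omega>) \<le> -(\<tau>/2) * real (\<beta> js) + \<epsilon> * real (n-js)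
            + birk \<phi> (n-js) ((T^^js) \<omega>)"
          using IH js(3) unfolding Q_def by auto
        have Tjs: "(T^^(js-j)) ((T^^j) \<omega>) = (T^^js) \<omega>" using js by (simp add: Tn_add2[symmetric])
        have sub: "a (n-j) ((T^^j) \<omega>) \<le> a (js-j) ((T^^j) \<omega>) + a (n-js) ((T^^js) \<omega>)"
        proof -
          have "n - j = (js - j) + (n - js)" using js by simp
          then show ?thesis using good_sub[OF gj, of "js-j" "n-js"] Tjs by simp
        qed
        have run: "a (js-j) ((T^^j) \<omega>) \<le> \<epsilon> * real (js-j) + 2 * real K * Mc + birk \<phi> (js-j) ((T^^j) \<omega>)"
          unfolding \<phi>_def by (rule run_bound[OF gj K Mc e])
        have birkeq: "birk \<phi> (n-j) ((T^^j) \<omega>) = birk \<phi> (js-j) ((T^^j) \<omega>) + birk \<phi> (n-js) ((T^^js) \<omega>)"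
        proof -
          have "n - j = (js - j) + (n - js)" using js by simp
          then show ?thesis using birk_add[of \<phi> "js-j" "n-js" "(T^^j) \<omega>"] Tjs by simp
        qed
        have rr: "real (n - j) = real (js - j) + real (n - js)" using js by simp
        have "a (n-j) ((T^^j) \<omega>) \<le> -(\<tau>/2) * real (\<beta> j) + \<epsilon> * real (n-j) + birk \<phi> (n-j) ((T^^j) \<omega>) + 2 * real K * Mc"
          using sub run Q' birkeq rr beq by (simp add: algebra_simps)
        then show ?thesis unfolding Q_def using nb jn by simp
      qed
    qed
  qed
  have Q0: "Q 0" by (rule main) simp
  have "\<beta> 0 = card {j. j < n \<and> (T^^j) \<omega> \<in> LB \<tau> L (n-j)}"
    unfolding \<beta>_def bad_def by (rule arg_cong[where f = card]) auto
  moreover have "(if bad 0 \<or> 0 = n then 0 else 2 * real K * Mc) \<le> 2 * real K * Mc" using KMc by simp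
  ultimately show ?thesis using Q0 unfolding Q_def \<phi>_def by simp
qed

end


context cocycle begin

lemma card_as_sum:
  fixes n :: nat
  shows "real (card {j. j < n \<and> P j}) = (\<Sum>j<n. (if P j then 1 else 0 :: real))"
proof -
  have "{j. j < n \<and> P j} = {j\<in>{..<n}. P j}" by auto
  then have "real (card {j. j < n \<and> P j}) = (\<Sum>j\<in>{j\<in>{..<n}. P j}. (1::real))" by simp
  also have "\<dots> = (\<Sum>j<n. (if P j then 1 else 0 :: real))" by (rule sum.inter_filter) simp
  finally show ?thesis .
qed

lemma indic_int: "A \<in> sets M \<Longrightarrow> integrable M (indicator A :: 'a \<Rightarrow> real)"
  using emeasure_finite[of A] by (intro integrable_real_indicator) (auto simp: less_top[symmetric])

lemma integral_indic_Tn: "A \<in> sets M \<Longrightarrow> integral\<^sup>L M (\<lambda>x. indicator A ((T^^j) x) :: real) = measure M A"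
  using integral_Tn[of "indicator A" j] by (simp add: emeasure_finite)

lemma sum_flip:
  fixes n :: nat
  shows "(\<Sum>j<n. g (n - j)) = (\<Sum>m\<in>{1..n}. g m :: real)"
  by (rule sum.reindex_bij_witness[where j = "\<lambda>j. n - j" and i = "\<lambda>m. n - m"]) auto

lemma core:
  fixes \<tau> \<epsilon> Mc :: real and L K n :: nat
  assumes tau: "0 < \<tau>" and L: "1 \<le> L" and K: "1 \<le> K" and Mc: "0 \<le> Mc"
    and e: "0 \<le> \<epsilon>" and cond: "4 * real K * Mc \<le> \<tau> * real L"
  shows "(\<Sum>m\<in>{1..n}. measure M (LB \<tau> L m)) \<le> (2/\<tau>) * ((\<epsilon> + integral\<^sup>L M (phi K Mc \<epsilon>)) * real n + 2 * real K * Mc)"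
proof -
  define cnt where "cnt x = (\<Sum>j<n. indicator (LB \<tau> L (n-j)) ((T^^j) x) :: real)" for x
  have cnt_eq: "real (card {j. j < n \<and> (T^^j) x \<in> LB \<tau> L (n-j)}) = cnt x" for x
    unfolding cnt_def card_as_sum by (rule sum.cong) (auto simp: indicator_def)
  have cnt_int: "integrable M cnt"
    unfolding cnt_def using integrable_Tn[OF indic_int[OF LB_meas]] by auto
  have cnt_integral: "integral\<^sup>L M cnt = (\<Sum>m\<in>{1..n}. measure M (LB \<tau> L m))"
  proof -
    have "integral\<^sup>L M cnt = (\<Sum>j<n. integral\<^sup>L M (\<lambda>x. indicator (LB \<tau> L (n-j)) ((T^^j) x) :: real))"
      unfolding cnt_def using integrable_Tn[OF indic_int[OF LB_meas]] by (simp add: integral_sum)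
    also have "\<dots> = (\<Sum>j<n. measure M (LB \<tau> L (n-j)))"
      by (simp add: integral_indic_Tn)
    also have "\<dots> = (\<Sum>m\<in>{1..n}. measure M (LB \<tau> L m))" by (rule sum_flip)
    finally show ?thesis .
  qed
  define \<phi> where "\<phi> = phi K Mc \<epsilon>"
  define R where "R x = (\<epsilon> * real n + 2 * real K * Mc) + birk \<phi> n x - (\<tau>/2) * cnt x" for x
  have R_int: "integrable M R"
    unfolding R_def \<phi>_def using birk_integrable[OF phi_int] cnt_int by auto
  have "AE x in M. a n x \<le> R x"
    using AE_good
  proof eventually_elim
    case (elim x)
    show ?case using path_bound[OF elim tau L K Mc e cond, of n] cnt_eq[of x]
      unfolding R_def \<phi>_def by simp
  qed
  then have "integral\<^sup>L M (a n) \<le> integral\<^sup>L M R"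
    using a_int R_int by (intro integral_mono_AE) auto
  also have "integral\<^sup>L M R = (\<epsilon> * real n + 2 * real K * Mc) + real n * integral\<^sup>L M \<phi> - (\<tau>/2) * integral\<^sup>L M cnt"
    unfolding R_def \<phi>_def using birk_integrable[OF phi_int] cnt_int birk_integral[OF phi_int]
    by (simp add: prob_space)
  finally have "(\<tau>/2) * integral\<^sup>L M cnt \<le> (\<epsilon> + integral\<^sup>L M \<phi>) * real n + 2 * real K * Mc"
    using a_pos[of n] by (simp add: algebra_simps)
  then have "integral\<^sup>L M cnt \<le> (2/\<tau>) * ((\<epsilon> + integral\<^sup>L M \<phi>) * real n + 2 * real K * Mc)"
    using tau by (simp add: field_simps)
  then show ?thesis using cnt_integral unfolding \<phi>_def by simp
qed

lemma LB_mono: "\<tau> \<le> \<tau>' \<Longrightarrow> L \<le> L' \<Longrightarrow> LB \<tau>' L' m \<subseteq> LB \<tau> L m"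
proof
  fix x assume tt: "\<tau> \<le> \<tau>'" "L \<le> L'" and x: "x \<in> LB \<tau>' L' m"
  then obtain l where l: "L' \<le> l" "l \<le> m" "a m x - a (m-l) ((T^^l) x) < -\<tau>' * real l" "x \<in> space M"
    unfolding LB_def by auto
  have "\<tau> * real l \<le> \<tau>' * real l" using tt by (intro mult_right_mono) auto
  then show "x \<in> LB \<tau> L m" using l tt unfolding LB_def by (auto intro!: exI[of _ l])
qed

lemma LB_empty: "m < L \<Longrightarrow> LB \<tau> L m = {}"
  unfolding LB_def by auto

lemma lower_level:
  fixes \<tau> \<eta> :: real
  assumes tau: "0 < \<tau>" and h: "0 < \<eta>"
  shows "\<exists>L0\<ge>1. \<forall>L\<ge>L0. \<forall>n. (\<Sum>m\<in>{1..n}. measure M (LB \<tau> L m)) \<le> \<eta> * real n"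
proof -
  obtain K Mc where KM: "1 \<le> K" "0 \<le> Mc" "integral\<^sup>L M (phi K Mc (\<eta>*\<tau>/8)) < \<eta>*\<tau>/8"
    using phi_small[of "\<eta>*\<tau>/8" "\<eta>*\<tau>/8"] tau h by auto
  define C where "C = 4 * real K * Mc / \<tau>"
  obtain L1 :: nat where L1: "4 * real K * Mc / \<tau> \<le> real L1" using real_nat_ceiling_ge by blast
  obtain L2 :: nat where L2: "2 * C / \<eta> \<le> real L2" using real_nat_ceiling_ge by blast
  define L0 where "L0 = L1 + L2 + 1"
  have X: "(\<Sum>m\<in>{1..n}. measure M (LB \<tau> L m)) \<le> \<eta> * real n" if LL: "L \<ge> L0" for L n
  proof (cases "n < L")
    case True
    then have "\<And>m. m \<in> {1..n} \<Longrightarrow> LB \<tau> L m = {}" by (intro LB_empty) auto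
    then show ?thesis using h by simp
  next
    case False
    have cond: "4 * real K * Mc \<le> \<tau> * real L"
    proof -
      have "4 * real K * Mc / \<tau> \<le> real L" using L1 LL unfolding L0_def by linarith
      then show ?thesis using tau by (simp add: field_simps)
    qed
    have "(\<Sum>m\<in>{1..n}. measure M (LB \<tau> L m)) \<le> (2/\<tau>) * ((\<eta>*\<tau>/8 + integral\<^sup>L M (phi K Mc (\<eta>*\<tau>/8))) * real n + 2 * real K * Mc)"
      using LL tau h KM cond unfolding L0_def by (intro core) auto
    also have "\<dots> \<le> (2/\<tau>) * ((\<eta>*\<tau>/4) * real n + 2 * real K * Mc)"
      using KM(3) tau by (intro mult_left_mono add_right_mono mult_right_mono) auto
    also have "\<dots> = \<eta>/2 * real n + C" unfolding C_def using tau by (simp add: field_simps)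
    also have "C \<le> \<eta>/2 * real n"
    proof -
      have "2 * C / \<eta> \<le> real n" using L2 LL False unfolding L0_def by linarith
      then show ?thesis using h by (simp add: field_simps)
    qed
    finally show ?thesis by simp
  qed
  have L0_1: "1 \<le> L0" unfolding L0_def by simp
  show ?thesis using L0_1 X by blast
qed

lemma lower_D:
  fixes \<eta> :: real
  assumes h: "0 < \<eta>"
  shows "\<exists>D\<ge>1. \<exists>C. \<forall>D'\<ge>D. \<forall>n. (\<Sum>m\<in>{1..n}. measure M (LB D' 1 m)) \<le> \<eta> * real n + C"
proof -
  obtain K Mc where KM: "1 \<le> K" "0 \<le> Mc" "integral\<^sup>L M (phi K Mc (\<eta>/4)) < \<eta>/4"
    using phi_small[of "\<eta>/4" "\<eta>/4"] h by auto
  define D where "D = max 1 (4 * real K * Mc)"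
  have D1: "1 \<le> D" unfolding D_def by simp
  have "(\<Sum>m\<in>{1..n}. measure M (LB D' 1 m)) \<le> \<eta> * real n + 4 * real K * Mc" if DD: "D' \<ge> D" for D' n
  proof -
    have "(\<Sum>m\<in>{1..n}. measure M (LB D' 1 m)) \<le> (\<Sum>m\<in>{1..n}. measure M (LB D 1 m))"
      using LB_mono[of D D' 1 1] DD by (intro sum_mono finite_measure_mono) auto
    also have "\<dots> \<le> (2/D) * ((\<eta>/4 + integral\<^sup>L M (phi K Mc (\<eta>/4))) * real n + 2 * real K * Mc)"
      using D1 h KM by (intro core) (auto simp: D_def)
    also have "\<dots> \<le> (2/D) * ((\<eta>/2) * real n + 2 * real K * Mc)"
      using KM(3) D1 by (intro mult_left_mono add_right_mono mult_right_mono) auto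
    also have "\<dots> = (\<eta> * real n + 4 * real K * Mc) / D" using D1 by (simp add: field_simps)
    also have "\<dots> \<le> (\<eta> * real n + 4 * real K * Mc) / 1"
      using D1 h KM by (intro divide_left_mono) auto
    finally show ?thesis by simp
  qed
  then show ?thesis using D1 by blast
qed

end


context cocycle begin

definition dl :: "real \<Rightarrow> (nat \<Rightarrow> nat) \<Rightarrow> nat \<Rightarrow> real" where
  "dl D Lk l = Min (insert D ((\<lambda>i. 1 / real (Suc i)) ` {i. i < l \<and> Lk i \<le> l}))"

lemma dl_fin: "finite (insert D ((\<lambda>i. 1 / real (Suc i)) ` {i. i < l \<and> Lk i \<le> l}))"
  by auto

lemma dl_pos: "0 < D \<Longrightarrow> 0 < dl D Lk l"
proof -
  assume D: "0 < D"
  have "dl D Lk l \<in> insert D ((\<lambda>i. 1 / real (Suc i)) ` {i. i < l \<and> Lk i \<le> l})"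
    unfolding dl_def by (rule Min_in[OF dl_fin]) auto
  then show ?thesis using D by auto
qed

lemma dl_cases: "dl D Lk l = D \<or> (\<exists>i<l. Lk i \<le> l \<and> dl D Lk l = 1 / real (Suc i))"
proof -
  have "dl D Lk l \<in> insert D ((\<lambda>i. 1 / real (Suc i)) ` {i. i < l \<and> Lk i \<le> l})"
    unfolding dl_def by (rule Min_in[OF dl_fin]) auto
  then show ?thesis by auto
qed

lemma dl_le: "i < l \<Longrightarrow> Lk i \<le> l \<Longrightarrow> dl D Lk l \<le> 1 / real (Suc i)"
  unfolding dl_def by (rule Min_le[OF dl_fin]) auto

lemma dl_lim:
  assumes D: "0 < D"
  shows "dl D Lk \<longlonglongrightarrow> 0"
proof (rule LIMSEQ_I)
  fix r :: real assume r: "0 < r"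
  obtain i :: nat where i: "1 / r < real i" using reals_Archimedean2 by blast
  have "1 / real (Suc i) < r"
  proof -
    have "1 < r * real i" using i r by (simp add: field_simps)
    also have "\<dots> < r * real (Suc i)" using r by simp
    finally show ?thesis using r by (simp add: field_simps)
  qed
  have "norm (dl D Lk l - 0) < r" if "l \<ge> Suc i + Lk i" for l
  proof -
    have "dl D Lk l \<le> 1 / real (Suc i)" using that by (intro dl_le) auto
    then show ?thesis using dl_pos[OF D, of Lk l] \<open>1 / real (Suc i) < r\<close> by simp
  qed
  then show "\<exists>no. \<forall>n\<ge>no. norm (dl D Lk n - 0) < r" by blast
qed

definition Bad :: "(nat \<Rightarrow> real) \<Rightarrow> nat \<Rightarrow> 'a set" where
  "Bad \<delta> m = {x\<in>space M. \<exists>l. 1 \<le> l \<and> l \<le> m \<and> real l * \<delta> l < \<bar>a m x - a (m-l) ((T^^l) x)\<bar>}"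

lemma Bad_meas[measurable]: "Bad \<delta> m \<in> sets M" unfolding Bad_def by measurable

definition LBall :: "real \<Rightarrow> (nat \<Rightarrow> nat) \<Rightarrow> nat \<Rightarrow> 'a set" where
  "LBall D Lk m = LB D 1 m \<union> (\<Union>i\<in>{..<m}. LB (1 / real (Suc i)) (Lk i) m)"

lemma LBall_meas[measurable]: "LBall D Lk m \<in> sets M" unfolding LBall_def by measurable

definition U0 :: "real \<Rightarrow> 'a set" where
  "U0 D = {x\<in>space M. \<exists>n\<ge>1. D * real n < a n x}"

lemma U0_meas[measurable]: "U0 D \<in> sets M" unfolding U0_def by measurable

definition Uall :: "real \<Rightarrow> (nat \<Rightarrow> nat) \<Rightarrow> 'a set" where
  "Uall D Lk = U0 D \<union> (\<Union>i. Sup_set (1 / real (Suc i)) (Lk i))"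

lemma Uall_meas[measurable]: "Uall D Lk \<in> sets M" unfolding Uall_def by measurable

lemma bad_in_LBall:
  assumes g: "good \<omega>" and U: "\<omega> \<notin> Uall D Lk" and B: "\<omega> \<in> Bad (dl D Lk) m"
  shows "\<omega> \<in> LBall D Lk m"
proof -
  have sp: "\<omega> \<in> space M" using g good_space by simp
  obtain l where l: "1 \<le> l" "l \<le> m" "real l * dl D Lk l < \<bar>a m \<omega> - a (m-l) ((T^^l) \<omega>)\<bar>"
    using B unfolding Bad_def by auto
  have up: "a m \<omega> - a (m-l) ((T^^l) \<omega>) \<le> a l \<omega>"
    using good_sub[OF g, of l "m-l"] l by simp
  show ?thesis
  proof (cases "a m \<omega> - a (m-l) ((T^^l) \<omega>) < 0")
    case True
    then have low: "a m \<omega> - a (m-l) ((T^^l) \<omega>) < - (dl D Lk l * real l)" using l(3) by (simp add: mult.commute)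
    from dl_cases[of D Lk l] show ?thesis
    proof
      assume "dl D Lk l = D"
      then have "\<omega> \<in> LB D 1 m" unfolding LB_def using low l sp by auto
      then show ?thesis unfolding LBall_def by auto
    next
      assume "\<exists>i<l. Lk i \<le> l \<and> dl D Lk l = 1 / real (Suc i)"
      then obtain i where i: "i < l" "Lk i \<le> l" "dl D Lk l = 1 / real (Suc i)" by auto
      then have "\<omega> \<in> LB (1 / real (Suc i)) (Lk i) m" unfolding LB_def using low l sp by auto
      then show ?thesis unfolding LBall_def using i l by auto
    qed
  next
    case False
    then have "real l * dl D Lk l < a l \<omega>" using l(3) up by simp
    from dl_cases[of D Lk l] have False
    proof
      assume "dl D Lk l = D"
      then have "\<omega> \<in> U0 D" unfolding U0_def using \<open>real l * dl D Lk l < a l \<omega>\<close> l sp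
        by (auto simp: mult.commute intro!: exI[of _ l])
      then show False using U unfolding Uall_def by auto
    next
      assume "\<exists>i<l. Lk i \<le> l \<and> dl D Lk l = 1 / real (Suc i)"
      then obtain i where i: "i < l" "Lk i \<le> l" "dl D Lk l = 1 / real (Suc i)" by auto
      then have "\<omega> \<in> Sup_set (1 / real (Suc i)) (Lk i)" unfolding Sup_set_def
        using \<open>real l * dl D Lk l < a l \<omega>\<close> sp by (auto simp: mult.commute intro!: exI[of _ l])
      then show False using U unfolding Uall_def by auto
    qed
    then show ?thesis ..
  qed
qed

lemma geo_sums: "(\<lambda>i. \<eta> / 2^(i+2)) sums (\<eta>/2 :: real)"
proof -
  have "(\<lambda>i. \<eta>/4 * (1/2)^i) sums (\<eta>/4 * (1 / (1 - 1/2)))"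
    by (intro sums_mult geometric_sums) auto
  moreover have "(\<lambda>i. \<eta>/4 * (1/2::real)^i) = (\<lambda>i. \<eta> / 2^(i+2))"
    by (auto simp: power_one_over power_add field_simps)
  ultimately show ?thesis by simp
qed

lemma Uall_measure:
  fixes \<eta> :: real
  assumes h: "0 < \<eta>" and U0m: "measure M (U0 D) < \<eta>/2"
    and Sm: "\<And>i. measure M (Sup_set (1 / real (Suc i)) (Lk i)) < \<eta> / 2^(i+2)"
  shows "measure M (Uall D Lk) \<le> \<eta>"
proof -
  have "emeasure M (\<Union>i. Sup_set (1 / real (Suc i)) (Lk i)) \<le> (\<Sum>i. emeasure M (Sup_set (1 / real (Suc i)) (Lk i)))"
    by (intro emeasure_subadditive_countably) auto
  also have "\<dots> \<le> (\<Sum>i. ennreal (\<eta> / 2^(i+2)))"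
  proof (intro suminf_le)
    fix i
    show "emeasure M (Sup_set (1 / real (Suc i)) (Lk i)) \<le> ennreal (\<eta> / 2^(i+2))"
      using Sm[of i] by (simp add: emeasure_eq_measure ennreal_leI less_imp_le del: of_nat_Suc)
  qed auto
  also have "\<dots> = ennreal (\<eta>/2)"
    using geo_sums[of \<eta>] h by (subst suminf_ennreal2) (auto simp: sums_iff)
  finally have "measure M (\<Union>i. Sup_set (1 / real (Suc i)) (Lk i)) \<le> \<eta>/2"
    using h by (simp add: emeasure_eq_measure)
  then show ?thesis unfolding Uall_def using measure_Un_le[where A="U0 D" and B="\<Union>i. Sup_set (1 / real (Suc i)) (Lk i)" and M=M] U0m
    by auto
qed

lemma LBall_sum:
  fixes \<eta> C0 :: real
  assumes h: "0 < \<eta>"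
    and L0: "\<And>n. (\<Sum>m\<in>{1..n}. measure M (LB D 1 m)) \<le> \<eta>/2 * real n + C0"
    and Li: "\<And>i n. (\<Sum>m\<in>{1..n}. measure M (LB (1 / real (Suc i)) (Lk i) m)) \<le> \<eta> / 2^(i+2) * real n"
  shows "(\<Sum>m\<in>{1..n}. measure M (LBall D Lk m)) \<le> \<eta> * real n + C0"
proof -
  have "(\<Sum>m\<in>{1..n}. measure M (LBall D Lk m)) \<le>
        (\<Sum>m\<in>{1..n}. measure M (LB D 1 m) + (\<Sum>i<n. measure M (LB (1 / real (Suc i)) (Lk i) m)))"
  proof (rule sum_mono)
    fix m assume m: "m \<in> {1..n}"
    have "measure M (LBall D Lk m) \<le> measure M (LB D 1 m) + measure M (\<Union>i\<in>{..<m}. LB (1 / real (Suc i)) (Lk i) m)"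
      unfolding LBall_def by (intro measure_Un_le) auto
    also have "measure M (\<Union>i\<in>{..<m}. LB (1 / real (Suc i)) (Lk i) m) \<le> (\<Sum>i<m. measure M (LB (1 / real (Suc i)) (Lk i) m))"
      by (intro measure_UNION_le) auto
    also have "\<dots> \<le> (\<Sum>i<n. measure M (LB (1 / real (Suc i)) (Lk i) m))"
      using m by (intro sum_mono2) auto
    finally show "measure M (LBall D Lk m) \<le> measure M (LB D 1 m) + (\<Sum>i<n. measure M (LB (1 / real (Suc i)) (Lk i) m))"
      by simp
  qed
  also have "\<dots> = (\<Sum>m\<in>{1..n}. measure M (LB D 1 m)) + (\<Sum>i<n. \<Sum>m\<in>{1..n}. measure M (LB (1 / real (Suc i)) (Lk i) m))"
  proof -
    have sw: "(\<Sum>m\<in>{1..n}. \<Sum>i<n. measure M (LB (1 / real (Suc i)) (Lk i) m)) = (\<Sum>i<n. \<Sum>m\<in>{1..n}. measure M (LB (1 / real (Suc i)) (Lk i) m))"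
      by (rule sum.swap)
    show ?thesis by (simp only: sum.distrib sw)
  qed
  also have "(\<Sum>i<n. \<Sum>m\<in>{1..n}. measure M (LB (1 / real (Suc i)) (Lk i) m)) \<le> (\<Sum>i<n. \<eta> / 2^(i+2) * real n)"
    by (intro sum_mono Li)
  also have "\<dots> = (\<Sum>i<n. \<eta> / 2^(i+2)) * real n" by (simp add: sum_distrib_right)
  also have "(\<Sum>i<n. \<eta> / 2^(i+2)) \<le> \<eta>/2"
    using geo_sums[of \<eta>] h by (subst sums_unique[OF geo_sums[of \<eta>]]) (intro sum_le_suminf, auto simp: sums_iff)
  finally have X: "(\<Sum>m\<in>{1..n}. measure M (LBall D Lk m)) \<le> (\<Sum>m\<in>{1..n}. measure M (LB D 1 m)) + \<eta>/2 * real n"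
    by (simp add: mult_right_mono)
  show ?thesis using X L0[of n] by linarith
qed

end


lemma ud_lemma:
  fixes S :: "nat set" and \<rho> :: real
  assumes rho: "0 < \<rho>"
    and lim: "liminf (\<lambda>N. ennreal (real (card ({..<N} - S)) / real N)) < ennreal \<rho>"
  shows "ereal (1 - \<rho>) \<le> upper_density S"
proof (rule ccontr)
  assume "\<not> ereal (1 - \<rho>) \<le> upper_density S"
  then have lt: "upper_density S < ereal (1 - \<rho>)" by simp
  have ev: "eventually (\<lambda>N. ereal (real (card (S \<inter> {0..<N})) / real N) < ereal (1 - \<rho>)) sequentially"
    using lt Limsup_le_iff[where C="upper_density S" and F=sequentially and X="\<lambda>N. ereal (real (card (S \<inter> {0..<N})) / real N)"]
    unfolding upper_density_def by auto
  have fr: "frequently (\<lambda>N. ennreal (real (card ({..<N} - S)) / real N) < ennreal \<rho>) sequentially"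
  proof (rule ccontr)
    assume "\<not> ?thesis"
    then have "eventually (\<lambda>N. ennreal \<rho> \<le> ennreal (real (card ({..<N} - S)) / real N)) sequentially"
      unfolding not_frequently by (simp add: not_less)
    then have "ennreal \<rho> \<le> liminf (\<lambda>N. ennreal (real (card ({..<N} - S)) / real N))"
      by (rule Liminf_bounded)
    then show False using lim by simp
  qed
  have "frequently (\<lambda>N. 0 < N \<and> (ennreal (real (card ({..<N} - S)) / real N) < ennreal \<rho> \<and>
        ereal (real (card (S \<inter> {0..<N})) / real N) < ereal (1 - \<rho>))) sequentially"
    using frequently_eventually_conj[OF fr ev] eventually_gt_at_top[of 0]
    by (rule frequently_eventually_conj[THEN frequently_elim1]) auto
  then obtain N where N: "0 < N" "ennreal (real (card ({..<N} - S)) / real N) < ennreal \<rho>"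
    "ereal (real (card (S \<inter> {0..<N})) / real N) < ereal (1 - \<rho>)"
    by (auto dest: frequently_ex)
  have c1: "real (card ({..<N} - S)) / real N < \<rho>" using N(2) by (simp add: ennreal_less_iff)
  have c2: "real (card (S \<inter> {0..<N})) / real N < 1 - \<rho>" using N(3) by simp
  have "card (S \<inter> {0..<N}) + card ({..<N} - S) = card ((S \<inter> {0..<N}) \<union> ({..<N} - S))"
    by (rule card_Un_disjoint[symmetric]) auto
  also have "(S \<inter> {0..<N}) \<union> ({..<N} - S) = {..<N}" by auto
  finally have "real (card (S \<inter> {0..<N})) + real (card ({..<N} - S)) = real N"
    by (metis card_lessThan of_nat_add)
  then have "real (card (S \<inter> {0..<N})) / real N + real (card ({..<N} - S)) / real N = 1"
    using N(1) by (simp add: field_simps)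
  then show False using c1 c2 by linarith
qed



context cocycle begin

lemma main_cocycle:
  fixes \<rho> :: real
  assumes rho: "0 < \<rho>"
  shows "\<exists>\<delta> :: nat \<Rightarrow> real. (\<forall>l. \<delta> l > 0) \<and> \<delta> \<longlonglongrightarrow> 0 \<and>
           (\<exists>Ob \<in> sets M. measure M Ob \<ge> 1 - \<rho> \<and>
              (\<forall>\<omega> \<in> Ob. upper_density
                 {n. \<forall>l\<in>{1..n}. \<bar>a n \<omega> - a (n - l) ((T ^^ l) \<omega>)\<bar> \<le> real l * \<delta> l} \<ge> ereal (1 - \<rho>)))"
proof -
  define \<eta> where "\<eta> = \<rho> * min 1 \<rho> / 4"
  have eta: "0 < \<eta>" unfolding \<eta>_def using rho by simp
  have eta1: "\<eta> \<le> \<rho>/4" unfolding \<eta>_def using rho by (simp add: min_def)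
  have eta2: "2 * \<eta> / \<rho> \<le> \<rho>/2" unfolding \<eta>_def using rho by (simp add: min_def field_simps)
  obtain D0 C0 where D0: "1 \<le> D0" "\<And>D' n. D' \<ge> D0 \<Longrightarrow> (\<Sum>m\<in>{1..n}. measure M (LB D' 1 m)) \<le> \<eta>/2 * real n + C0"
    using lower_D[of "\<eta>/2"] eta by auto
  obtain D1 where D1: "1 \<le> D1" "measure M {x\<in>space M. \<exists>n\<ge>1. D1 * real n < a n x} < \<eta>/2"
    using kingman_D[of "\<eta>/2"] eta by auto
  define D where "D = max D0 D1"
  have Dpos: "0 < D" unfolding D_def using D0 by simp
  have U0m: "measure M (U0 D) < \<eta>/2"
  proof -
    have "U0 D \<subseteq> {x\<in>space M. \<exists>n\<ge>1. D1 * real n < a n x}"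
    proof
      fix x assume "x \<in> U0 D"
      then obtain n where n: "x \<in> space M" "1 \<le> n" "D * real n < a n x" unfolding U0_def by auto
      have "D1 * real n \<le> D * real n" unfolding D_def by (intro mult_right_mono) auto
      then have "D1 * real n < a n x" using n by linarith
      then show "x \<in> {x\<in>space M. \<exists>n\<ge>1. D1 * real n < a n x}" using n by blast
    qed
    then have "measure M (U0 D) \<le> measure M {x\<in>space M. \<exists>n\<ge>1. D1 * real n < a n x}"
      by (intro finite_measure_mono) auto
    then show ?thesis using D1(2) by linarith
  qed
  have lev: "\<forall>i. \<exists>L. Suc i \<le> L \<and> (\<forall>n. (\<Sum>m\<in>{1..n}. measure M (LB (1 / real (Suc i)) L m)) \<le> \<eta> / 2^(i+2) * real n)
              \<and> measure M (Sup_set (1 / real (Suc i)) L) < \<eta> / 2^(i+2)"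
  proof
    fix i
    have t: "0 < 1 / real (Suc i)" by simp
    have e': "0 < \<eta> / 2^(i+2)" using eta by simp
    obtain L0 where L0: "1 \<le> L0" "\<And>L n. L \<ge> L0 \<Longrightarrow> (\<Sum>m\<in>{1..n}. measure M (LB (1 / real (Suc i)) L m)) \<le> \<eta> / 2^(i+2) * real n"
      using lower_level[OF t e'] by auto
    obtain N where N: "\<And>L. L \<ge> N \<Longrightarrow> measure M (Sup_set (1 / real (Suc i)) L) < \<eta> / 2^(i+2)"
      using kingman_measure[OF t e'] unfolding eventually_sequentially by auto
    show "\<exists>L. Suc i \<le> L \<and> (\<forall>n. (\<Sum>m\<in>{1..n}. measure M (LB (1 / real (Suc i)) L m)) \<le> \<eta> / 2^(i+2) * real n)
              \<and> measure M (Sup_set (1 / real (Suc i)) L) < \<eta> / 2^(i+2)"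
      using L0(2)[of "L0 + N + Suc i"] N[of "L0 + N + Suc i"] by (intro exI[of _ "L0 + N + Suc i"]) auto
  qed
  then obtain Lk where Lk: "\<And>i. Suc i \<le> Lk i"
      "\<And>i n. (\<Sum>m\<in>{1..n}. measure M (LB (1 / real (Suc i)) (Lk i) m)) \<le> \<eta> / 2^(i+2) * real n"
      "\<And>i. measure M (Sup_set (1 / real (Suc i)) (Lk i)) < \<eta> / 2^(i+2)"
    by metis
  define \<delta> where "\<delta> = dl D Lk"
  have dpos: "\<forall>l. \<delta> l > 0" unfolding \<delta>_def using dl_pos[OF Dpos] by auto
  have dlim: "\<delta> \<longlonglongrightarrow> 0" unfolding \<delta>_def by (rule dl_lim[OF Dpos])
  have Um: "measure M (Uall D Lk) \<le> \<eta>" by (rule Uall_measure[OF eta U0m Lk(3)])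
  have Lsum: "\<And>n. (\<Sum>m\<in>{1..n}. measure M (LBall D Lk m)) \<le> \<eta> * real n + C0"
    by (rule LBall_sum[OF eta _ Lk(2)]) (use D0 in \<open>auto simp: D_def\<close>)
  obtain Nn where Nn: "Nn \<in> null_sets M" "{x\<in>space M. \<not> good x} \<subseteq> Nn"
    by (rule AE_E[OF AE_good]) blast
  have Nnm[measurable]: "Nn \<in> sets M" using Nn by auto
  define \<Omega> where "\<Omega> = space M - Uall D Lk - Nn"
  have \<Omega>m[measurable]: "\<Omega> \<in> sets M" unfolding \<Omega>_def by measurable
  define cnt where "cnt N x = (\<Sum>m<N. indicator (Bad \<delta> m) x :: real)" for N x
  define f where "f N x = ennreal (cnt N x / real N) * indicator \<Omega> x" for N x
  have fm[measurable]: "f N \<in> borel_measurable M" for N unfolding f_def cnt_def by measurable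
  have LBall0: "LBall D Lk 0 = {}" unfolding LBall_def using LB_empty[of 0 1 D] by simp
  have fbound: "integral\<^sup>N M (f N) \<le> ennreal ((\<eta> * real N + C0) / real N)" if N: "0 < N" for N
  proof -
    define h where "h x = (\<Sum>m<N. indicator (LBall D Lk m) x :: real) / real N" for x
    have hint: "integrable M h" unfolding h_def using indic_int[OF LBall_meas] by auto
    have "integral\<^sup>N M (f N) \<le> integral\<^sup>N M (\<lambda>x. ennreal (h x))"
    proof (rule nn_integral_mono)
      fix x assume x: "x \<in> space M"
      show "f N x \<le> ennreal (h x)"
      proof (cases "x \<in> \<Omega>")
        case True
        then have g: "good x" and U: "x \<notin> Uall D Lk" unfolding \<Omega>_def using Nn(2) by auto
        have "cnt N x \<le> (\<Sum>m<N. indicator (LBall D Lk m) x)"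
          unfolding cnt_def
        proof (rule sum_mono)
          fix m
          show "indicator (Bad \<delta> m) x \<le> (indicator (LBall D Lk m) x :: real)"
            using bad_in_LBall[OF g U, of m] unfolding \<delta>_def by (auto simp: indicator_def)
        qed
        then have "cnt N x / real N \<le> h x" unfolding h_def using N by (simp add: divide_right_mono)
        then show ?thesis unfolding f_def using True by (simp add: ennreal_leI)
      next
        case False then show ?thesis unfolding f_def by simp
      qed
    qed
    also have "\<dots> = ennreal (integral\<^sup>L M h)"
    proof (rule nn_integral_eq_integral[OF hint])
      show "AE x in M. 0 \<le> h x" unfolding h_def by (intro AE_I2 divide_nonneg_nonneg sum_nonneg) auto
    qed
    also have "integral\<^sup>L M h = (\<Sum>m<N. measure M (LBall D Lk m)) / real N"
      unfolding h_def using indic_int[OF LBall_meas] by (simp add: integral_sum)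
    also have "(\<Sum>m<N. measure M (LBall D Lk m)) \<le> (\<Sum>m\<in>{1..N}. measure M (LBall D Lk m))"
    proof -
      have "(\<Sum>m<N. measure M (LBall D Lk m)) = (\<Sum>m\<in>{1..<N}. measure M (LBall D Lk m))"
      proof (cases N)
        case (Suc N')
        have "{..<N} = insert 0 {1..<N}" using Suc by auto
        then show ?thesis using LBall0 by simp
      qed simp
      also have "\<dots> \<le> (\<Sum>m\<in>{1..N}. measure M (LBall D Lk m))" by (intro sum_mono2) auto
      finally show ?thesis .
    qed
    also have "\<dots> \<le> \<eta> * real N + C0" by (rule Lsum)
    finally show ?thesis using N by (simp add: divide_right_mono ennreal_leI)
  qed
  have ev: "eventually (\<lambda>N. integral\<^sup>N M (f N) \<le> ennreal (2*\<eta>)) sequentially"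
  proof -
    obtain N0 :: nat where N0: "C0/\<eta> \<le> real N0" using real_nat_ceiling_ge by blast
    show ?thesis unfolding eventually_sequentially
    proof (intro exI[of _ "N0+1"] allI impI)
      fix N assume N: "N0 + 1 \<le> N"
      then have Npos: "0 < N" by simp
      have "C0 \<le> \<eta> * real N"
      proof -
        have "C0/\<eta> \<le> real N" using N0 N by linarith
        then show ?thesis using eta by (simp add: field_simps)
      qed
      then have "(\<eta> * real N + C0) / real N \<le> 2 * \<eta>" using Npos by (simp add: field_simps)
      then show "integral\<^sup>N M (f N) \<le> ennreal (2*\<eta>)"
        using fbound[OF Npos] order.trans ennreal_leI by blast
    qed
  qed
  have lf: "liminf (\<lambda>N. integral\<^sup>N M (f N)) \<le> ennreal (2*\<eta>)"
    by (rule Liminf_le) (use ev in auto)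
  have fatou: "(\<integral>\<^sup>+x. liminf (\<lambda>N. f N x) \<partial>M) \<le> liminf (\<lambda>N. integral\<^sup>N M (f N))"
    by (rule nn_integral_liminf) simp
  define Fbig where "Fbig = {x\<in>space M. ennreal \<rho> \<le> liminf (\<lambda>N. f N x)}"
  have Fbigm[measurable]: "Fbig \<in> sets M" unfolding Fbig_def by measurable
  have "ennreal \<rho> * emeasure M Fbig = (\<integral>\<^sup>+x. ennreal \<rho> * indicator Fbig x \<partial>M)"
    by (rule nn_integral_cmult_indicator[symmetric]) simp
  also have "\<dots> \<le> (\<integral>\<^sup>+x. liminf (\<lambda>N. f N x) \<partial>M)"
    by (intro nn_integral_mono) (auto simp: Fbig_def indicator_def)
  also have "\<dots> \<le> ennreal (2*\<eta>)" using fatou lf by (rule order.trans)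
  finally have "ennreal (\<rho> * measure M Fbig) \<le> ennreal (2*\<eta>)"
    using rho by (simp add: emeasure_eq_measure ennreal_mult'')
  then have "\<rho> * measure M Fbig \<le> 2 * \<eta>" using eta by (simp add: ennreal_le_iff)
  then have Fm: "measure M Fbig \<le> 2 * \<eta> / \<rho>" using rho by (simp add: field_simps)
  define Ob where "Ob = \<Omega> - Fbig"
  have Obm: "Ob \<in> sets M" unfolding Ob_def by measurable
  have "measure M (space M - Ob) \<le> measure M (Uall D Lk \<union> Nn \<union> Fbig)"
    unfolding Ob_def \<Omega>_def by (intro finite_measure_mono) auto
  also have "\<dots> \<le> measure M (Uall D Lk \<union> Nn) + measure M Fbig" by (intro measure_Un_le) auto
  also have "measure M (Uall D Lk \<union> Nn) \<le> measure M (Uall D Lk) + measure M Nn" by (intro measure_Un_le) auto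
  also have "measure M Nn = 0" using Nn(1) by (simp add: measure_def null_sets_def)
  finally have "measure M (space M - Ob) \<le> \<eta> + 2 * \<eta> / \<rho>" using Um Fm by linarith
  then have "measure M (space M - Ob) \<le> \<rho>" using eta1 eta2 rho by linarith
  moreover have "measure M Ob = 1 - measure M (space M - Ob)"
  proof -
    have "space M - (space M - Ob) = Ob" using sets.sets_into_space[OF Obm] by auto
    then show ?thesis using prob_compl[of "space M - Ob"] Obm by auto
  qed
  ultimately have Obmeas: "1 - \<rho> \<le> measure M Ob" by linarith
  have dens: "ereal (1 - \<rho>) \<le> upper_density {n. \<forall>l\<in>{1..n}. \<bar>a n \<omega> - a (n - l) ((T ^^ l) \<omega>)\<bar> \<le> real l * \<delta> l}"
    if om: "\<omega> \<in> Ob" for \<omega>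
  proof (rule ud_lemma[OF rho])
    define S where "S = {n. \<forall>l\<in>{1..n}. \<bar>a n \<omega> - a (n - l) ((T ^^ l) \<omega>)\<bar> \<le> real l * \<delta> l}"
    have sp: "\<omega> \<in> space M" and inO: "\<omega> \<in> \<Omega>" and nF: "\<omega> \<notin> Fbig" using om unfolding Ob_def \<Omega>_def by auto
    have eqf: "f N \<omega> = ennreal (real (card ({..<N} - S)) / real N)" for N
    proof -
      have "{..<N} - S = {m. m < N \<and> \<omega> \<in> Bad \<delta> m}"
        unfolding S_def Bad_def using sp by (auto simp: not_le) (meson atLeastAtMost_iff not_le)
      then have "real (card ({..<N} - S)) = real (card {m. m < N \<and> \<omega> \<in> Bad \<delta> m})" by simp
      also have "\<dots> = cnt N \<omega>"
        unfolding cnt_def card_as_sum by (rule sum.cong) (auto simp: indicator_def)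
      finally have "real (card ({..<N} - S)) = cnt N \<omega>" .
      then show ?thesis unfolding f_def using inO by simp
    qed
    have "\<not> ennreal \<rho> \<le> liminf (\<lambda>N. f N \<omega>)" using nF sp unfolding Fbig_def by auto
    then show "liminf (\<lambda>N. ennreal (real (card ({..<N} - S)) / real N)) < ennreal \<rho>"
      unfolding eqf[symmetric] by (simp add: not_le)
  qed
  show ?thesis using dpos dlim Obm Obmeas dens by blast
qed
end 


lemma ext_int_eq:
  assumes "integrable M f"
  shows "ext_integral M f = ereal (integral\<^sup>L M f)"
proof -
  obtain r q where rq: "0 \<le> r" "0 \<le> q" "(\<integral>\<^sup>+x. ennreal (f x)\<partial>M) = ennreal r"
    "(\<integral>\<^sup>+x. ennreal (-f x)\<partial>M) = ennreal q" "integral\<^sup>L M f = r - q"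
    using integrableE[OF assms] by metis
  have "ext_integral M f = ereal r - ereal q" unfolding ext_integral_def rq using rq(1,2) by simp
  then show ?thesis using rq(5) by simp
qed

lemma ext_int_minf:
  assumes "(\<integral>\<^sup>+x. ennreal (f x)\<partial>M) \<noteq> \<top>" "(\<integral>\<^sup>+x. ennreal (-f x)\<partial>M) = \<top>"
  shows "ext_integral M f = -\<infinity>"
proof -
  obtain r where r: "enn2ereal (\<integral>\<^sup>+x. ennreal (f x)\<partial>M) = ereal r"
    using assms(1) by (cases "enn2ereal (\<integral>\<^sup>+x. ennreal (f x)\<partial>M)") auto
  show ?thesis unfolding ext_integral_def r assms(2) by simp
qed

lemma birk_AE_bound:
  fixes a :: "nat \<Rightarrow> 'w \<Rightarrow> real"
  assumes mpt: "mpt M T"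
    and a0: "\<And>\<omega>. \<omega> \<in> space M \<Longrightarrow> a 0 \<omega> = 0"
    and sub: "\<And>n m. n > 0 \<Longrightarrow> m > 0 \<Longrightarrow> AE \<omega> in M. a (n + m) \<omega> \<le> a n \<omega> + a m ((T ^^ n) \<omega>)"
  shows "AE x in M. \<forall>n. a n x \<le> mpt.birk T (a 1) n x"
proof -
  interpret mpt M T by (rule mpt)
  have "AE x in M. \<forall>n. 0 < n \<longrightarrow> a (n + 1) x \<le> a n x + a 1 ((T ^^ n) x)"
  proof (subst AE_all_countable, intro allI)
    fix n :: nat
    show "AE x in M. 0 < n \<longrightarrow> a (n + 1) x \<le> a n x + a 1 ((T ^^ n) x)"
    proof (cases "0 < n")
      case True
      from sub[OF True zero_less_one] show ?thesis by eventually_elim simp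
    qed simp
  qed
  then show ?thesis using AE_space
  proof eventually_elim
    case (elim x)
    show ?case
    proof
      fix n show "a n x \<le> birk (a 1) n x"
      proof (induction n)
        case 0 then show ?case using a0 elim(2) by simp
      next
        case (Suc n)
        show ?case
        proof (cases "n = 0")
          case True then show ?thesis using a0 elim(2) by (simp add: birk_def)
        next
          case False
          then have "a (n+1) x \<le> a n x + a 1 ((T ^^ n) x)" using elim(1) by simp
          then show ?thesis using Suc birk_Suc_right[of "a 1" n x] by simp
        qed
      qed
    qed
  qed
qed

theorem mainTheorem2:
  fixes M :: "'w measure" and T :: "'w \<Rightarrow> 'w" and a :: "nat \<Rightarrow> 'w \<Rightarrow> real"
    and A :: ereal and \<rho> :: real
  assumes "prob_space M"
    and "ergodic_map M T"
    and "\<And>n. a n \<in> borel_measurable M"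
    and "\<And>\<omega>. \<omega> \<in> space M \<Longrightarrow> a 0 \<omega> = 0"
    and "\<And>n m. n > 0 \<Longrightarrow> m > 0 \<Longrightarrow>
           AE \<omega> in M. a (n + m) \<omega> \<le> a n \<omega> + a m ((T ^^ n) \<omega>)"
    and "integrable M (a 1)"
    and "A = (INF n\<in>{1..}. ext_integral M (a n) / ereal (real n))"
    and "\<bar>A\<bar> \<noteq> \<infinity>"
    and "\<rho> > 0"
  shows "\<exists>\<delta> :: nat \<Rightarrow> real. (\<forall>l. \<delta> l > 0) \<and> \<delta> \<longlonglongrightarrow> 0 \<and>
           (\<exists>Ob \<in> sets M. measure M Ob \<ge> 1 - \<rho> \<and>
              (\<forall>\<omega> \<in> Ob. upper_density
                 {n. \<forall>l\<in>{1..n}. \<bar>a n \<omega> - a (n - l) ((T ^^ l) \<omega>) - real_of_ereal A * real l\<bar>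
                        \<le> real l * \<delta> l} \<ge> ereal (1 - \<rho>)))"
proof -
  note ps = assms(1) and am[measurable] = assms(3)
  have mptMT: "mpt M T"
    using assms(1,2) unfolding ergodic_map_def measure_preserving_map_def
    by (intro mpt.intro mpt_axioms.intro) auto
  interpret mpt M T by (rule mptMT)
  have emptMT: "empt M T"
    using assms(2) unfolding ergodic_map_def
    by (intro empt.intro empt_axioms.intro mptMT) auto
  have bound: "AE x in M. \<forall>n. a n x \<le> birk (a 1) n x"
    by (rule birk_AE_bound[OF mptMT assms(4) assms(5)])
  have posfin: "(\<integral>\<^sup>+x. ennreal (a n x) \<partial>M) \<noteq> \<top>" for n
  proof -
    have "(\<integral>\<^sup>+x. ennreal (a n x) \<partial>M) \<le> (\<integral>\<^sup>+x. ennreal (birk (a 1) n x) \<partial>M)"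
      using bound by (intro nn_integral_mono_AE) (auto elim!: eventually_mono intro: ennreal_leI)
    moreover have "(\<integral>\<^sup>+x. ennreal (birk (a 1) n x) \<partial>M) \<noteq> \<top>"
      using birk_integrable[OF assms(6), of n] unfolding real_integrable_def by auto
    ultimately show ?thesis by (auto simp: top_unique)
  qed
  define A0 where "A0 = real_of_ereal A"
  have AA0: "A = ereal A0" unfolding A0_def using assms(8) by (cases A) auto
  have Ale: "A \<le> ext_integral M (a n) / ereal (real n)" if "1 \<le> n" for n
    unfolding assms(7) using that by (intro INF_lower) auto
  have int_an: "integrable M (a n)" for n
  proof (cases "n = 0")
    case True
    have "integrable M (a 0) \<longleftrightarrow> integrable M (\<lambda>x. 0::real)"
      by (rule Bochner_Integration.integrable_cong) (use assms(4) in auto)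
    then show ?thesis using True by simp
  next
    case False
    have negfin: "(\<integral>\<^sup>+x. ennreal (- a n x) \<partial>M) \<noteq> \<top>"
    proof
      assume inf: "(\<integral>\<^sup>+x. ennreal (- a n x) \<partial>M) = \<top>"
      have "ext_integral M (a n) = -\<infinity>" by (rule ext_int_minf[OF posfin inf])
      then have "A \<le> -\<infinity>" using Ale[of n] False by simp
      then show False using AA0 by simp
    qed
    show ?thesis unfolding real_integrable_def using posfin negfin by auto
  qed
  have A0le: "real n * A0 \<le> integral\<^sup>L M (a n)" for n
  proof (cases "n = 0")
    case True
    have "integral\<^sup>L M (a 0) = integral\<^sup>L M (\<lambda>x. 0::real)"
      by (rule Bochner_Integration.integral_cong) (use assms(4) in auto)
    then show ?thesis using True by simp
  next
    case False
    have "ereal A0 \<le> ereal (integral\<^sup>L M (a n)) / ereal (real n)"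
      using Ale[of n] False AA0 ext_int_eq[OF int_an[of n]] by simp
    then have "A0 \<le> integral\<^sup>L M (a n) / real n" using False by simp
    then show ?thesis using False by (simp add: field_simps)
  qed
  have A0inf: "\<exists>K\<ge>1. integral\<^sup>L M (a K) - real K * A0 \<le> \<tau> * real K" if t: "0 < \<tau>" for \<tau> :: real
  proof -
    have "A < ereal (A0 + \<tau>)" using AA0 t by simp
    then obtain n where n: "n \<in> {1..}" "ext_integral M (a n) / ereal (real n) < ereal (A0 + \<tau>)"
      unfolding assms(7) INF_less_iff by auto
    then have "ereal (integral\<^sup>L M (a n)) / ereal (real n) < ereal (A0 + \<tau>)"
      using ext_int_eq[OF int_an[of n]] by simp
    then have "integral\<^sup>L M (a n) / real n < A0 + \<tau>" using n(1) by simp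
    then have "integral\<^sup>L M (a n) - real n * A0 \<le> \<tau> * real n" using n(1) by (simp add: field_simps)
    then show ?thesis using n(1) by auto
  qed
  define b where "b n x = a n x - real n * A0" for n x
  have coc: "cocycle M T b"
  proof (intro cocycle.intro[OF emptMT] cocycle_axioms.intro)
    show "b n \<in> borel_measurable M" for n unfolding b_def by measurable
    show "b 0 x = 0" if "x \<in> space M" for x unfolding b_def using assms(4)[OF that] by simp
    show "AE x in M. b (n + m) x \<le> b n x + b m ((T ^^ n) x)" if "0 < n" "0 < m" for n m
      using assms(5)[OF that] by eventually_elim (simp add: b_def algebra_simps)
    show "integrable M (b n)" for n unfolding b_def using int_an[of n] by auto
    show "0 \<le> integral\<^sup>L M (b n)" for n
      unfolding b_def using int_an[of n] A0le[of n] by (simp add: prob_space)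
    show "\<exists>K\<ge>1. integral\<^sup>L M (b K) \<le> \<tau> * real K" if "0 < \<tau>" for \<tau> :: real
      unfolding b_def using A0inf[OF that] int_an by (simp add: prob_space)
  qed
  obtain \<delta> Ob where d: "\<forall>l. \<delta> l > 0" "\<delta> \<longlonglongrightarrow> 0" "Ob \<in> sets M" "measure M Ob \<ge> 1 - \<rho>"
    "\<forall>\<omega> \<in> Ob. upper_density {n. \<forall>l\<in>{1..n}. \<bar>b n \<omega> - b (n - l) ((T ^^ l) \<omega>)\<bar> \<le> real l * \<delta> l} \<ge> ereal (1 - \<rho>)"
    using cocycle.main_cocycle[OF coc assms(9)] by blast
  have seteq: "{n. \<forall>l\<in>{1..n}. \<bar>b n \<omega> - b (n - l) ((T ^^ l) \<omega>)\<bar> \<le> real l * \<delta> l} =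
     {n. \<forall>l\<in>{1..n}. \<bar>a n \<omega> - a (n - l) ((T ^^ l) \<omega>) - real_of_ereal A * real l\<bar> \<le> real l * \<delta> l}" for \<omega>
  proof -
    have E: "b n \<omega> - b (n - l) ((T ^^ l) \<omega>) = a n \<omega> - a (n - l) ((T ^^ l) \<omega>) - real_of_ereal A * real l"
      if "l \<in> {1..n}" for n l
      using that unfolding b_def A0_def by (simp add: of_nat_diff algebra_simps)
    show ?thesis
    proof (intro Collect_cong ball_cong)
      fix n l :: nat assume l: "l \<in> {1..n}"
      show "(\<bar>b n \<omega> - b (n - l) ((T ^^ l) \<omega>)\<bar> \<le> real l * \<delta> l) =
            (\<bar>a n \<omega> - a (n - l) ((T ^^ l) \<omega>) - real_of_ereal A * real l\<bar> \<le> real l * \<delta> l)"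
        using E[OF l] by simp
    qed simp

  qed
  have P5: "\<forall>\<omega> \<in> Ob. upper_density {n. \<forall>l\<in>{1..n}. \<bar>a n \<omega> - a (n - l) ((T ^^ l) \<omega>) - real_of_ereal A * real l\<bar>
                        \<le> real l * \<delta> l} \<ge> ereal (1 - \<rho>)"
    using d(5) by (simp only: seteq)
  show ?thesis
    by (rule exI[of _ \<delta>], intro conjI d(1) d(2) bexI[of _ Ob] d(4) P5 d(3))
qed



end
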